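(* For $p\in\mathbb N$: $R(\mathcal K^I_p)=R(\mathcal K^{II}_p)=1$ if $p=1$ and $=0$ if $p\ge2$. For $p\ge2$: $R(\mathcal H_p)=-2$ if $p=2$ and $R(\mathcal H_p)=0$ if $p\ge3$.
   Context: Here $k=p$. Special graphs (on vertices $j_1,\dots,j_{2p}$ (distinct), $u_0$, $v_0$, with $v_0\notin J=\{j_1,\dots,j_{2p}\}$): $\mathcal H_p$ ($p\ge2$): $u_0=j_1$; edges $j_1j_2$, $j_1j_3$, $j_4v_0$, and $j_{2q-1}j_{2q}$ for $3\le q\le p$. $\mathcal K^I_p$: $u_0=j_1$; edges $j_2v_0$ and $j_{2q-1}j_{2q}$ for $2\le q\le p$. $\mathcal K^{II}_p$: $u_0\notin J$; edges $j_1u_0$, $j_2v_0$, and $j_{2q-1}j_{2q}$ for $2\le q\le p$. Graph-partition sums: for a multigraph $\mathcal G=(V,\mathcal E)$ and $\mathcal F\subseteq\mathcal E$, $\partial\mathcal F$ is the set of vertices of odd degree in $(V,\mathcal F)$. A partition $\mathscr T$ of $\mathcal G$ consists of: a partition $\mathscr P$ of $J$ into blocks of positive even size; a distinguished block $Q\in\mathscr P$; and pairwise disjoint edge sets $\mathcal E_P$ ($P\in\mathscr P$) and $\mathcal E'_1,\dots,\mathcal E'_{p+1-|\mathscr P|}$ (ordered) with union $\mathcal E$, such that $\partial\mathcal E_P=P$ for $P\ne Q$, $\partial\mathcal E_Q=Q\triangle\{u_0,v_0\}$, $\partial\mathcal E'_i=\emptyset$, and $u_0$ is not connected to $v_0$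 in $(V,\mathcal E_Q\cup\mathcal E'_1)$; $n(\mathscr T)=|\mathscr P|$. $R(\mathcal G)=\sum_{\mathscr T}(-1)^{n(\mathscr T)-1}(n(\mathscr T)-1)!$ over all partitions of $\mathcal G$. *)

theory Defs
  imports Main "HOL-Library.Disjoint_Sets"
begin

text \<open>A multigraph is given by a list of edges; edge labels are the list indices
  0..<length es.  Edge subsets are sets of indices.\<close>

definition deg :: "('v \<times> 'v) list \<Rightarrow> nat set \<Rightarrow> 'v \<Rightarrow> nat" where
  "deg es F v = (\<Sum>e\<in>F. (if fst (es ! e) = v then 1 else 0) + (if snd (es ! e) = v then 1 else 0))"

definition bdry :: "('v \<times> 'v) list \<Rightarrow> nat set \<Rightarrow> 'v set" where
  "bdry es F = {v. odd (deg es F v)}"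

definition conn :: "('v \<times> 'v) list \<Rightarrow> nat set \<Rightarrow> 'v \<Rightarrow> 'v \<Rightarrow> bool" where
  "conn es F x y = (\<lambda>a b. \<exists>e\<in>F. es ! e = (a, b) \<or> es ! e = (b, a))\<^sup>*\<^sup>* x y"

type_synonym 'v gpart = "'v set set \<times> 'v set \<times> ('v set \<Rightarrow> nat set) \<times> (nat \<Rightarrow> nat set)"

text \<open>A partition (PP, Q, EP, E') of the graph; EP and E' are taken extensional
  (empty outside PP resp. {1..p+1-|PP|}) so that each partition is represented once.\<close>
definition is_gpart :: "nat \<Rightarrow> 'v set \<Rightarrow> 'v \<Rightarrow> 'v \<Rightarrow> ('v \<times> 'v) list \<Rightarrow> 'v gpart \<Rightarrow> bool" where
  "is_gpart p J u0 v0 es T \<longleftrightarrow>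
     (case T of (PP, Q, EP, E') \<Rightarrow>
       (let m = p + 1 - card PP in
         partition_on J PP \<and> (\<forall>P\<in>PP. 0 < card P \<and> even (card P)) \<and> Q \<in> PP \<and>
         (\<forall>P. P \<notin> PP \<longrightarrow> EP P = {}) \<and> (\<forall>i. i \<notin> {1..m} \<longrightarrow> E' i = {}) \<and>
         (\<forall>P\<in>PP. \<forall>P'\<in>PP. P \<noteq> P' \<longrightarrow> EP P \<inter> EP P' = {}) \<and>
         (\<forall>i\<in>{1..m}. \<forall>i'\<in>{1..m}. i \<noteq> i' \<longrightarrow> E' i \<inter> E' i' = {}) \<and>
         (\<forall>P\<in>PP. \<forall>i\<in>{1..m}. EP P \<inter> E' i = {}) \<and>
         (\<Union>P\<in>PP. EP P) \<union> (\<Union>i\<in>{1..m}. E' i) = {0..<length es} \<and>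
         (\<forall>P\<in>PP - {Q}. bdry es (EP P) = P) \<and>
         bdry es (EP Q) = (Q - {u0, v0}) \<union> ({u0, v0} - Q) \<and>
         (\<forall>i\<in>{1..m}. bdry es (E' i) = {}) \<and>
         \<not> conn es (EP Q \<union> E' 1) u0 v0))"

definition Rsum :: "nat \<Rightarrow> 'v set \<Rightarrow> 'v \<Rightarrow> 'v \<Rightarrow> ('v \<times> 'v) list \<Rightarrow> int" where
  "Rsum p J u0 v0 es =
     (\<Sum>T\<in>{T. is_gpart p J u0 v0 es T}.
        (-1) ^ (card (fst T) - 1) * int (fact (card (fst T) - 1)))"

text \<open>Edge lists of the special graphs; j 1, ..., j (2p) are the vertices of J.\<close>
definition pairs_from :: "(nat \<Rightarrow> 'v) \<Rightarrow> nat \<Rightarrow> nat \<Rightarrow> ('v \<times> 'v) list" where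
  "pairs_from j a p = map (\<lambda>q. (j (2*q - 1), j (2*q))) [a..<p+1]"

definition H_edges :: "nat \<Rightarrow> (nat \<Rightarrow> 'v) \<Rightarrow> 'v \<Rightarrow> ('v \<times> 'v) list" where
  "H_edges p j v0 = [(j 1, j 2), (j 1, j 3), (j 4, v0)] @ pairs_from j 3 p"

definition KI_edges :: "nat \<Rightarrow> (nat \<Rightarrow> 'v) \<Rightarrow> 'v \<Rightarrow> ('v \<times> 'v) list" where
  "KI_edges p j v0 = [(j 2, v0)] @ pairs_from j 2 p"

definition KII_edges :: "nat \<Rightarrow> (nat \<Rightarrow> 'v) \<Rightarrow> 'v \<Rightarrow> 'v \<Rightarrow> ('v \<times> 'v) list" where
  "KII_edges p j u0 v0 = [(j 1, u0), (j 2, v0)] @ pairs_from j 2 p"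

end

theory Submission
  imports Defs
begin


definition w :: "nat \<Rightarrow> int" where "w k = (-1) ^ (k - 1) * int (fact (k - 1))"

lemma w_Suc: "k \<ge> 1 \<Longrightarrow> w (Suc k) = - int k * w k"
proof -
  assume "k \<ge> 1"
  then obtain l where k: "k = Suc l" by (cases k) auto
  show ?thesis unfolding w_def k by (simp add: algebra_simps)
qed

lemma part_insert_sum:
  assumes fin: "finite S" and ne: "S \<noteq> {}" and x: "x \<notin> S"
  shows "(\<Sum>\<rho>\<in>{\<rho>. partition_on (insert x S) \<rho>}. w (card \<rho>)) = 0"
proof -
  define Sig where "Sig = Sigma {\<pi>. partition_on S \<pi>} (\<lambda>\<pi>. insert None (Some ` \<pi>))"
  define jj where "jj = (\<lambda>(\<pi>, oc). case oc of None \<Rightarrow> insert {x} \<pi>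
        | Some B \<Rightarrow> insert (insert x B) (\<pi> - {B}))"
  define blk where "blk = (\<lambda>\<rho>. THE C. C \<in> \<rho> \<and> x \<in> C)"
  define ii where "ii = (\<lambda>\<rho>. if blk \<rho> = {x} then (\<rho> - {blk \<rho>}, None)
        else (insert (blk \<rho> - {x}) (\<rho> - {blk \<rho>}), Some (blk \<rho> - {x})))"
  define h where "h = (\<lambda>(\<pi>::'a set set, oc::'a set option). case oc of None \<Rightarrow> w (Suc (card \<pi>)) | Some B \<Rightarrow> w (card \<pi>))"
  have blk: "blk \<rho> \<in> \<rho> \<and> x \<in> blk \<rho>" and blk_uniq: "\<And>C. C \<in> \<rho> \<Longrightarrow> x \<in> C \<Longrightarrow> C = blk \<rho>"
    if "partition_on (insert x S) \<rho>" for \<rho>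
  proof -
    have ex: "\<exists>!C. C \<in> \<rho> \<and> x \<in> C" using that
      unfolding partition_on_def disjoint_def by blast
    show "blk \<rho> \<in> \<rho> \<and> x \<in> blk \<rho>" unfolding blk_def by (rule theI'[OF ex])
    show "\<And>C. C \<in> \<rho> \<Longrightarrow> x \<in> C \<Longrightarrow> C = blk \<rho>" using ex \<open>blk \<rho> \<in> \<rho> \<and> x \<in> blk \<rho>\<close> by blast
  qed
  have A: "jj a \<in> {\<rho>. partition_on (insert x S) \<rho>} \<and> ii (jj a) = a \<and> w (card (jj a)) = h a"
    if a: "a \<in> Sig" for a
  proof -
    obtain \<pi> oc where a_eq: "a = (\<pi>, oc)" and \<pi>: "partition_on S \<pi>" and oc: "oc \<in> insert None (Some ` \<pi>)"
      using a unfolding Sig_def by auto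
    have xnot: "\<And>B. B \<in> \<pi> \<Longrightarrow> x \<notin> B" using \<pi> x unfolding partition_on_def by blast
    have finpi: "finite \<pi>" using \<pi> fin finite_elements by blast
    have pi_ne: "\<And>B. B \<in> \<pi> \<Longrightarrow> B \<noteq> {}" using \<pi> unfolding partition_on_def by blast
    have pi_sub: "\<And>B. B \<in> \<pi> \<Longrightarrow> B \<subseteq> S" using \<pi> unfolding partition_on_def by blast
    have pi_dis: "\<And>B B'. B \<in> \<pi> \<Longrightarrow> B' \<in> \<pi> \<Longrightarrow> B \<noteq> B' \<Longrightarrow> B \<inter> B' = {}"
      using \<pi> unfolding partition_on_def disjoint_def by blast
    show "jj a \<in> {\<rho>. partition_on (insert x S) \<rho>} \<and> ii (jj a) = a \<and> w (card (jj a)) = h a"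
    proof (cases oc)
      case None
      have xx: "{x} \<notin> \<pi>" using xnot by blast
      have P: "partition_on (insert x S) (insert {x} \<pi>)"
        using \<pi> x by (subst partition_on_insert) (auto simp: disjnt_def xnot)
      have "blk (insert {x} \<pi>) = {x}" using blk_uniq[OF P, of "{x}"] by simp
      then show ?thesis using P xx finpi by (simp add: a_eq None jj_def ii_def h_def)
    next
      case (Some B)
      with oc have B: "B \<in> \<pi>" by auto
      have xB: "insert x B \<notin> \<pi> - {B}" using xnot by blast
      have eqpi: "\<pi> = insert B (\<pi> - {B})" using B by blast
      have d0: "disjnt B (\<Union> (\<pi> - {B}))" using pi_dis B unfolding disjnt_def by blast
      have "partition_on S (insert B (\<pi> - {B}))" using \<pi> B by (simp add: insert_Diff insert_absorb)
      hence P0: "partition_on (S - B) (\<pi> - {B})" using partition_on_insert[OF d0] by simp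
      have P: "partition_on (insert x S) (insert (insert x B) (\<pi> - {B}))"
      proof (subst partition_on_insert)
        show "disjnt (insert x B) (\<Union> (\<pi> - {B}))" using xnot pi_dis B unfolding disjnt_def by blast
        have "insert x S - insert x B = S - B" using x by blast
        then show "partition_on (insert x S - insert x B) (\<pi> - {B}) \<and> insert x B \<subseteq> insert x S \<and> insert x B \<noteq> {}"
          using P0 pi_sub B by auto
      qed
      have bl: "blk (insert (insert x B) (\<pi> - {B})) = insert x B" using blk_uniq[OF P, of "insert x B"] by simp
      have nx: "insert x B \<noteq> {x}" using pi_ne[OF B] xnot[OF B] by blast
      have xB2: "insert x B - {x} = B" using xnot[OF B] by blast
      have r: "insert B (insert (insert x B) (\<pi> - {B}) - {insert x B}) = \<pi>" using xB B by blast
      have c: "card (insert (insert x B) (\<pi> - {B})) = card \<pi>"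
        proof -
        have "card \<pi> > 0" using finpi B card_gt_0_iff by blast
        then show ?thesis using xB finpi B by (simp add: card_insert_if card_Diff_singleton)
      qed
      show ?thesis using P bl nx xB2 r c by (simp add: a_eq Some jj_def ii_def h_def)
    qed
  qed
  have B: "jj (ii b) = b \<and> ii b \<in> Sig" if b: "b \<in> {\<rho>. partition_on (insert x S) \<rho>}" for b
  proof -
    from b have b': "partition_on (insert x S) b" by simp
    note bb = blk[OF b'] blk_uniq[OF b']
    have bdis: "\<And>B B'. B \<in> b \<Longrightarrow> B' \<in> b \<Longrightarrow> B \<noteq> B' \<Longrightarrow> B \<inter> B' = {}"
      using b' unfolding partition_on_def disjoint_def by blast
    have bsub: "\<And>B. B \<in> b \<Longrightarrow> B \<subseteq> insert x S" using b' unfolding partition_on_def by blast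
    have bne: "\<And>B. B \<in> b \<Longrightarrow> B \<noteq> {}" using b' unfolding partition_on_def by blast
    have beq: "b = insert (blk b) (b - {blk b})" using bb by blast
    have d1: "disjnt (blk b) (\<Union> (b - {blk b}))" using bdis bb(1) unfolding disjnt_def by blast
    have "partition_on (insert x S) (insert (blk b) (b - {blk b}))" using b' bb(1) by (simp add: insert_Diff insert_absorb)
    hence P1: "partition_on (insert x S - blk b) (b - {blk b})" using partition_on_insert[OF d1] by simp
    show "jj (ii b) = b \<and> ii b \<in> Sig"
    proof (cases "blk b = {x}")
      case True
      have "insert x S - blk b = S" using \<open>blk b = {x}\<close> x by simp
      then show ?thesis using \<open>blk b = {x}\<close> P1 beq by (simp add: ii_def jj_def Sig_def)
    next
      case False
      define C' where "C' = blk b - {x}"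
      have C'ne: "C' \<noteq> {}" using False bb(1) bne unfolding C'_def by blast
      have C'not: "C' \<notin> b - {blk b}" using C'ne bdis bb(1) unfolding C'_def by blast
      have ins: "insert x C' = blk b" using bb(1) unfolding C'_def by blast
      have P2: "partition_on S (insert C' (b - {blk b}))"
      proof (subst partition_on_insert)
        show "disjnt C' (\<Union> (b - {blk b}))" using bdis bb(1) unfolding disjnt_def C'_def by blast
        have "S - C' = insert x S - blk b" using x bb(1) bsub[OF bb(1)[THEN conjunct1]] unfolding C'_def by blast
        then show "partition_on (S - C') (b - {blk b}) \<and> C' \<subseteq> S \<and> C' \<noteq> {}"
          using P1 C'ne bsub[OF bb(1)[THEN conjunct1]] unfolding C'_def by auto
      qed
      have "jj (ii b) = insert (insert x C') (insert C' (b - {blk b}) - {C'})"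
        using False by (simp add: ii_def jj_def C'_def)
      also have "\<dots> = b" using ins C'not beq by auto
      finally show ?thesis using False P2 by (simp add: ii_def Sig_def C'_def)
    qed
  qed
  have "(\<Sum>a\<in>Sig. h a) = (\<Sum>\<rho>\<in>{\<rho>. partition_on (insert x S) \<rho>}. w (card \<rho>))"
    by (rule sum.reindex_bij_witness[where i=ii and j=jj]) (use A B in auto)
  moreover have "(\<Sum>a\<in>Sig. h a) = 0"
  proof -
    have finP: "finite {\<pi>. partition_on S \<pi>}" using finitely_many_partition_on[OF fin] .
    have inner: "(\<Sum>oc\<in>insert None (Some ` \<pi>). h (\<pi>, oc)) = 0" if "partition_on S \<pi>" for \<pi>
    proof -
      have finpi: "finite \<pi>" using that fin finite_elements by blast
      have "\<pi> \<noteq> {}" using that ne unfolding partition_on_def by auto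
      hence k: "card \<pi> \<ge> 1" using finpi by (simp add: Suc_le_eq card_gt_0_iff)
      have "(\<Sum>oc\<in>insert None (Some ` \<pi>). h (\<pi>, oc)) = w (Suc (card \<pi>)) + (\<Sum>oc\<in>Some ` \<pi>. h (\<pi>, oc))"
        using finpi by (subst sum.insert) (auto simp: h_def)
      also have "(\<Sum>oc\<in>Some ` \<pi>. h (\<pi>, oc)) = int (card \<pi>) * w (card \<pi>)"
        by (subst sum.reindex) (auto simp: h_def)
      finally show ?thesis using w_Suc[OF k] by simp
    qed
    have "(\<Sum>a\<in>Sig. h a) = (\<Sum>\<pi>\<in>{\<pi>. partition_on S \<pi>}. \<Sum>oc\<in>insert None (Some ` \<pi>). h (\<pi>, oc))"
      unfolding Sig_def using finP fin
      by (subst sum.Sigma) (auto intro: finite_elements)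
    also have "\<dots> = 0" using inner by simp
    finally show ?thesis .
  qed
  ultimately show ?thesis by simp
qed

lemma part_single: "{\<pi>. partition_on {x} \<pi>} = {{{x}}}"
proof -
  have "\<pi> = {{x}}" if "partition_on {x} \<pi>" for \<pi>
  proof -
    have "\<And>B. B \<in> \<pi> \<Longrightarrow> B \<subseteq> {x} \<and> B \<noteq> {}" using that unfolding partition_on_def by auto
    hence "\<And>B. B \<in> \<pi> \<Longrightarrow> B = {x}" by (metis subset_singleton_iff)
    moreover have "\<pi> \<noteq> {}" using that unfolding partition_on_def by auto
    ultimately show ?thesis by blast
  qed
  moreover have "partition_on {x} {{x}}" by (rule partition_on_space) simp
  ultimately show ?thesis by blast
qed

lemma part_sum:
  assumes "finite A" "A \<noteq> {}"
  shows "(\<Sum>\<pi>\<in>{\<pi>. partition_on A \<pi>}. w (card \<pi>)) = (if card A = 1 then 1 else 0)"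
  using assms
proof (induction A rule: finite_ne_induct)
  case (singleton x)
  then show ?case by (simp add: part_single w_def)
next
  case (insert x F)
  have "card (insert x F) \<noteq> 1" using insert card_gt_0_iff by fastforce
  then show ?case using part_insert_sum[OF insert(1,2,3)] by simp
qed

definition coarser :: "'a set \<Rightarrow> 'a set set \<Rightarrow> 'a set set set" where
  "coarser J U = {PP. partition_on J PP \<and> (\<forall>u\<in>U. \<exists>P\<in>PP. u \<subseteq> P)}"

lemma coarser_sum:
  assumes U: "partition_on J U" and fin: "finite J"
  shows "(\<Sum>PP\<in>coarser J U. w (card PP)) = (\<Sum>\<pi>\<in>{\<pi>. partition_on U \<pi>}. w (card \<pi>))"
proof -
  define phi where "phi = (\<lambda>PP. (\<lambda>P. {u\<in>U. u \<subseteq> P}) ` PP)"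
  define psi where "psi = (\<lambda>\<pi>::'a set set set. Union ` \<pi>)"
  have Une: "\<And>u. u \<in> U \<Longrightarrow> u \<noteq> {}" and Udis: "\<And>u u'. u \<in> U \<Longrightarrow> u' \<in> U \<Longrightarrow> u \<noteq> u' \<Longrightarrow> u \<inter> u' = {}"
    and Uun: "\<Union>U = J"
    using U unfolding partition_on_def disjoint_def by blast+
  have inj: "inj_on Union \<pi>" and cardpsi: "card (psi \<pi>) = card \<pi>" and
     psiP: "psi \<pi> \<in> coarser J U" and phipsi: "phi (psi \<pi>) = \<pi>"
    if pi: "partition_on U \<pi>" for \<pi>
  proof -
    have pne: "\<And>B. B \<in> \<pi> \<Longrightarrow> B \<noteq> {}" and pdis: "\<And>B B'. B \<in> \<pi> \<Longrightarrow> B' \<in> \<pi> \<Longrightarrow> B \<noteq> B' \<Longrightarrow> B \<inter> B' = {}"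
      and pun: "\<Union>\<pi> = U"
      using pi unfolding partition_on_def disjoint_def by blast+
    have UD: "\<Union>B \<inter> \<Union>B' = {}" if "B \<in> \<pi>" "B' \<in> \<pi>" "B \<noteq> B'" for B B'
    proof -
      have "\<And>u u'. u \<in> B \<Longrightarrow> u' \<in> B' \<Longrightarrow> u \<inter> u' = {}"
        using pdis[OF that] Udis pun that by blast
      then show ?thesis by blast
    qed
    have UNE: "\<Union>B \<noteq> {}" if B: "B \<in> \<pi>" for B
    proof -
      obtain u where u: "u \<in> B" using pne[OF B] by auto
      then have "u \<in> U" using pun B by auto
      then have "u \<noteq> {}" using Une by simp
      then show ?thesis using u by auto
    qed
    show inj: "inj_on Union \<pi>"
    proof (rule inj_onI)
      fix B B' assume "B \<in> \<pi>" "B' \<in> \<pi>" "\<Union>B = \<Union>B'"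
      then show "B = B'" using UD UNE by (metis Int_absorb)
    qed
    show "card (psi \<pi>) = card \<pi>" unfolding psi_def using inj by (rule card_image)
    have "partition_on J (psi \<pi>)"
    proof (rule partition_onI)
      show "\<Union>(psi \<pi>) = J" unfolding psi_def using pun Uun by blast
      show "\<And>p q. p \<in> psi \<pi> \<Longrightarrow> q \<in> psi \<pi> \<Longrightarrow> p \<noteq> q \<Longrightarrow> disjnt p q"
        unfolding psi_def disjnt_def using UD by blast
      show "{} \<notin> psi \<pi>" unfolding psi_def using UNE by auto
    qed
    moreover have "\<forall>u\<in>U. \<exists>P\<in>psi \<pi>. u \<subseteq> P" unfolding psi_def using pun by blast
    ultimately show "psi \<pi> \<in> coarser J U" unfolding coarser_def by blast
    have "{u \<in> U. u \<subseteq> \<Union>B} = B" if BB: "B \<in> \<pi>" for B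
    proof
      show "B \<subseteq> {u \<in> U. u \<subseteq> \<Union>B}" using BB pun by blast
      show "{u \<in> U. u \<subseteq> \<Union>B} \<subseteq> B"
      proof
        fix u assume u: "u \<in> {u \<in> U. u \<subseteq> \<Union>B}"
        then obtain B' where B': "B' \<in> \<pi>" "u \<in> B'" using pun by blast
        have "B' = B"
        proof (rule ccontr)
          assume "B' \<noteq> B"
          then have "\<Union>B' \<inter> \<Union>B = {}" using UD B' BB by simp
          moreover have "u \<subseteq> \<Union>B'" using B' by blast
          moreover have "u \<subseteq> \<Union>B" "u \<in> U" using u by auto
          ultimately have "u = {}" by (metis Int_greatest subset_empty)
          then show False using Une \<open>u \<in> U\<close> by simp
        qed
        then show "u \<in> B" using B' by simp
      qed
    qed
    then show "phi (psi \<pi>) = \<pi>" unfolding phi_def psi_def by (simp add: image_image)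
  qed
  have phiP: "partition_on U (phi PP)" and psiphi: "psi (phi PP) = PP"
    if PP: "PP \<in> coarser J U" for PP
  proof -
    have pp: "partition_on J PP" and cov: "\<forall>u\<in>U. \<exists>P\<in>PP. u \<subseteq> P" using PP unfolding coarser_def by auto
    have Pne: "\<And>P. P \<in> PP \<Longrightarrow> P \<noteq> {}" and Pdis: "\<And>P P'. P \<in> PP \<Longrightarrow> P' \<in> PP \<Longrightarrow> P \<noteq> P' \<Longrightarrow> P \<inter> P' = {}"
      and Pun: "\<Union>PP = J"
      using pp unfolding partition_on_def disjoint_def by blast+
    have key: "\<Union>{u \<in> U. u \<subseteq> P} = P" if PinPP: "P \<in> PP" for P
    proof
      show "\<Union>{u \<in> U. u \<subseteq> P} \<subseteq> P" by blast
      show "P \<subseteq> \<Union>{u \<in> U. u \<subseteq> P}"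
      proof
        fix x assume x: "x \<in> P"
        then obtain u where u: "u \<in> U" "x \<in> u" using Pun Uun PinPP by blast
        then obtain P' where P': "P' \<in> PP" "u \<subseteq> P'" using cov by blast
        have "x \<in> P'" using u P' by blast
        then have "P' = P" using Pdis[OF P'(1) PinPP] x by (metis IntI empty_iff)
        then show "x \<in> \<Union>{u \<in> U. u \<subseteq> P}" using u P' by blast
      qed
    qed
    show "psi (phi PP) = PP" unfolding psi_def phi_def using key by (simp add: image_image)
    show "partition_on U (phi PP)"
    proof (rule partition_onI)
      show "\<Union>(phi PP) = U" unfolding phi_def using cov by blast
      show "\<And>p q. p \<in> phi PP \<Longrightarrow> q \<in> phi PP \<Longrightarrow> p \<noteq> q \<Longrightarrow> disjnt p q"
      proof -
        fix p q assume "p \<in> phi PP" "q \<in> phi PP" "p \<noteq> q"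
        then obtain P P' where PP': "P \<in> PP" "P' \<in> PP" "p = {u \<in> U. u \<subseteq> P}" "q = {u \<in> U. u \<subseteq> P'}" "P \<noteq> P'"
          unfolding phi_def by blast
        have "u \<notin> q" if "u \<in> p" for u
        proof
          assume "u \<in> q"
          then have "u \<subseteq> P \<inter> P'" "u \<in> U" using that PP' by auto
          then show False using Pdis[OF PP'(1,2,5)] Une by auto
        qed
        then show "disjnt p q" unfolding disjnt_def by blast
      qed
      show "{} \<notin> phi PP"
      proof
        assume "{} \<in> phi PP"
        then obtain P where "P \<in> PP" "{u \<in> U. u \<subseteq> P} = {}" unfolding phi_def by blast
        then show False using key Pne by (metis Union_empty)
      qed
    qed
  qed
  show ?thesis
  proof (rule sum.reindex_bij_witness[where i=psi and j=phi])
    fix a assume a: "a \<in> coarser J U"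
    show "psi (phi a) = a" using psiphi[OF a] .
    show "phi a \<in> {\<pi>. partition_on U \<pi>}" using phiP[OF a] by simp
    have "card (phi a) = card (psi (phi a))" using cardpsi[OF phiP[OF a]] by simp
    then show "w (card (phi a)) = w (card a)" using psiphi[OF a] by simp
  next
    fix b assume "b \<in> {\<pi>. partition_on U \<pi>}"
    then show "phi (psi b) = b" "psi b \<in> coarser J U" using phipsi psiP by auto
  qed
qed



definition Rset :: "nat \<Rightarrow> (nat \<Rightarrow> 'v) \<Rightarrow> 'v set \<Rightarrow> nat set" where
  "Rset n rep P = {e\<in>{0..<n}. rep e \<in> P}"

definition EPof :: "nat \<Rightarrow> (nat \<Rightarrow> 'v) \<Rightarrow> 'v set set \<Rightarrow> 'v set \<Rightarrow> nat set" where
  "EPof n rep PP = (\<lambda>P. if P \<in> PP then Rset n rep P else {})"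

definition gcond where
  "gcond J u0 v0 es rep PP Q \<longleftrightarrow> partition_on J PP \<and> (\<forall>P\<in>PP. 0 < card P \<and> even (card P)) \<and> Q \<in> PP \<and>
     (\<forall>P\<in>PP - {Q}. bdry es (Rset (length es) rep P) = P) \<and>
     bdry es (Rset (length es) rep Q) = (Q - {u0, v0}) \<union> ({u0, v0} - Q) \<and>
     \<not> conn es (Rset (length es) rep Q) u0 v0"

lemma bdry_empty[simp]: "bdry es {} = {}"
  by (simp add: bdry_def deg_def)

lemma gpart_iff:
  assumes A1: "\<And>e. e < length es \<Longrightarrow> rep e \<in> J"
    and A2: "\<And>F e. F \<subseteq> {0..<length es} \<Longrightarrow> e < length es \<Longrightarrow> rep e \<in> bdry es F \<longleftrightarrow> e \<in> F"
    and A3: "\<And>e. e < length es \<Longrightarrow> rep e \<noteq> u0 \<and> rep e \<noteq> v0"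
  shows "is_gpart p J u0 v0 es T \<longleftrightarrow>
    (\<exists>PP Q. T = (PP, Q, EPof (length es) rep PP, \<lambda>i. {}) \<and> gcond J u0 v0 es rep PP Q)"
proof -
  define n where "n = length es"
  obtain PP Q EP E' where T: "T = (PP, Q, EP, E')" by (cases T) auto
  show ?thesis
  proof
    assume "is_gpart p J u0 v0 es T"
    then have G: "is_gpart p J u0 v0 es (PP, Q, EP, E')" using T by simp
    define m where "m = p + 1 - card PP"
    note G' = G[unfolded is_gpart_def prod.case Let_def, folded m_def]
    have part: "partition_on J PP" and QP: "Q \<in> PP" and EPout: "\<And>P. P \<notin> PP \<Longrightarrow> EP P = {}"
      and E'out: "\<And>i. i \<notin> {1..m} \<Longrightarrow> E' i = {}"
      and cov: "(\<Union>P\<in>PP. EP P) \<union> (\<Union>i\<in>{1..m}. E' i) = {0..<n}"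
      and bP: "\<And>P. P \<in> PP - {Q} \<Longrightarrow> bdry es (EP P) = P"
      and bQ: "bdry es (EP Q) = (Q - {u0, v0}) \<union> ({u0, v0} - Q)"
      and bE: "\<And>i. i \<in> {1..m} \<Longrightarrow> bdry es (E' i) = {}"
      and ev: "\<forall>P\<in>PP. 0 < card P \<and> even (card P)"
      and nc: "\<not> conn es (EP Q \<union> E' 1) u0 v0"
      using G' unfolding n_def by auto
    have Pdis: "\<And>P P'. P \<in> PP \<Longrightarrow> P' \<in> PP \<Longrightarrow> P \<noteq> P' \<Longrightarrow> P \<inter> P' = {}"
      using part unfolding partition_on_def disjoint_def by blast
    have E'e: "E' i = {}" for i
    proof (cases "i \<in> {1..m}")
      case True
      have sub: "E' i \<subseteq> {0..<n}" using cov True by blast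
      show ?thesis
      proof (rule ccontr)
        assume "E' i \<noteq> {}"
        then obtain e where e: "e \<in> E' i" by auto
        then have "e < n" using sub by auto
        then have "rep e \<in> bdry es (E' i)" using A2[of "E' i" e] sub e unfolding n_def by auto
        then show False using bE[OF True] by simp
      qed
    qed (use E'out in auto)
    have repP: "rep e \<in> P" if P: "P \<in> PP" and e: "e \<in> EP P" for P e
    proof -
      have sub: "EP P \<subseteq> {0..<n}" using cov P by blast
      then have en: "e < n" using e by auto
      then have "rep e \<in> bdry es (EP P)" using A2[of "EP P" e] sub e unfolding n_def by auto
      then show ?thesis using bP[of P] bQ A3[of e] en P unfolding n_def by (cases "P = Q") auto
    qed
    have EPeq: "EP P = Rset n rep P" if P: "P \<in> PP" for P
    proof
      show "EP P \<subseteq> Rset n rep P" using repP[OF P] cov P unfolding Rset_def by blast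
      show "Rset n rep P \<subseteq> EP P"
      proof
        fix e assume "e \<in> Rset n rep P"
        then have en: "e < n" and re: "rep e \<in> P" unfolding Rset_def by auto
        have "e \<in> (\<Union>P\<in>PP. EP P)" using cov E'e en by auto
        then obtain P' where P': "P' \<in> PP" "e \<in> EP P'" by blast
        have "rep e \<in> P'" using repP[OF P'] .
        then have "P' = P" using Pdis[OF P'(1) P] re by blast
        then show "e \<in> EP P" using P' by simp
      qed
    qed
    have "EP = EPof n rep PP"
      by (rule ext) (simp add: EPof_def EPeq EPout)
    moreover have "E' = (\<lambda>i. {})" using E'e by auto
    moreover have "gcond J u0 v0 es rep PP Q"
      unfolding gcond_def using part ev QP bP bQ nc EPeq QP E'e unfolding n_def by auto
    ultimately show "\<exists>PP Q. T = (PP, Q, EPof (length es) rep PP, \<lambda>i. {}) \<and> gcond J u0 v0 es rep PP Q"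
      using T unfolding n_def by blast
  next
    assume "\<exists>PP Q. T = (PP, Q, EPof (length es) rep PP, \<lambda>i. {}) \<and> gcond J u0 v0 es rep PP Q"
    then obtain PP Q where T: "T = (PP, Q, EPof n rep PP, \<lambda>i. {})" and g: "gcond J u0 v0 es rep PP Q"
      unfolding n_def by blast
    have part: "partition_on J PP" and ev: "\<forall>P\<in>PP. 0 < card P \<and> even (card P)" and QP: "Q \<in> PP"
      and bP: "\<forall>P\<in>PP - {Q}. bdry es (Rset n rep P) = P"
      and bQ: "bdry es (Rset n rep Q) = (Q - {u0, v0}) \<union> ({u0, v0} - Q)"
      and nc: "\<not> conn es (Rset n rep Q) u0 v0"
      using g unfolding gcond_def n_def by auto
    have Pdis: "\<And>P P'. P \<in> PP \<Longrightarrow> P' \<in> PP \<Longrightarrow> P \<noteq> P' \<Longrightarrow> P \<inter> P' = {}"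
      using part unfolding partition_on_def disjoint_def by blast
    have PU: "\<Union>PP = J" using part unfolding partition_on_def by blast
    have dis: "\<forall>P\<in>PP. \<forall>P'\<in>PP. P \<noteq> P' \<longrightarrow> EPof n rep PP P \<inter> EPof n rep PP P' = {}"
      using Pdis unfolding EPof_def Rset_def by auto
    have cov: "(\<Union>P\<in>PP. EPof n rep PP P) = {0..<n}"
    proof
      show "(\<Union>P\<in>PP. EPof n rep PP P) \<subseteq> {0..<n}" unfolding EPof_def Rset_def by auto
      show "{0..<n} \<subseteq> (\<Union>P\<in>PP. EPof n rep PP P)"
      proof
        fix e assume "e \<in> {0..<n}"
        then have en: "e < n" by simp
        then have "rep e \<in> \<Union>PP" using A1 PU unfolding n_def by auto
        then obtain P where "P \<in> PP" "rep e \<in> P" by auto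
        then show "e \<in> (\<Union>P\<in>PP. EPof n rep PP P)" using en unfolding EPof_def Rset_def by auto
      qed
    qed
    show "is_gpart p J u0 v0 es T"
      unfolding T is_gpart_def Let_def
      using part ev QP bP bQ nc dis cov unfolding n_def by (auto simp: EPof_def)
  qed
qed

lemma Rsum_reduce:
  assumes A1: "\<And>e. e < length es \<Longrightarrow> rep e \<in> J"
    and A2: "\<And>F e. F \<subseteq> {0..<length es} \<Longrightarrow> e < length es \<Longrightarrow> rep e \<in> bdry es F \<longleftrightarrow> e \<in> F"
    and A3: "\<And>e. e < length es \<Longrightarrow> rep e \<noteq> u0 \<and> rep e \<noteq> v0"
    and C: "\<And>PP Q. gcond J u0 v0 es rep PP Q \<longleftrightarrow> PP \<in> CC \<and> Q = qf PP"
  shows "Rsum p J u0 v0 es = (\<Sum>PP\<in>CC. w (card PP))"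
proof -
  define g where "g = (\<lambda>PP. (PP, qf PP, EPof (length es) rep PP, \<lambda>i::nat. {}::nat set))"
  have "{T. is_gpart p J u0 v0 es T} = g ` CC"
    unfolding g_def using gpart_iff[OF A1 A2 A3] C by auto
  moreover have "inj_on g CC" unfolding g_def by (rule inj_onI) simp
  ultimately show ?thesis unfolding Rsum_def
    by (simp add: sum.reindex w_def g_def)
qed

lemma sum_ind: "finite F \<Longrightarrow> (\<Sum>e\<in>F. if P e then 1 else 0 :: nat) = card {e\<in>F. P e}"
  by (simp add: sum.If_cases Int_def conj_commute)

lemma bdry_AB:
  assumes "F \<subseteq> {0..<length es}"
    and "\<And>e. e < length es \<Longrightarrow> fst (es ! e) = v \<longleftrightarrow> e \<in> A"
    and "\<And>e. e < length es \<Longrightarrow> snd (es ! e) = v \<longleftrightarrow> e \<in> B"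
  shows "v \<in> bdry es F \<longleftrightarrow> odd (card (F \<inter> A) + card (F \<inter> B))"
proof -
  have "deg es F v = (\<Sum>e\<in>F. if fst (es ! e) = v then 1 else 0) + (\<Sum>e\<in>F. if snd (es ! e) = v then 1 else 0)"
    unfolding deg_def by (simp add: sum.distrib)
  also have "\<dots> = card {e\<in>F. fst (es ! e) = v} + card {e\<in>F. snd (es ! e) = v}"
    using finite_subset[OF assms(1)] by (simp add: sum_ind)
  also have "{e\<in>F. fst (es ! e) = v} = F \<inter> A"
  proof -
    have "fst (es ! e) = v \<longleftrightarrow> e \<in> A" if "e \<in> F" for e
      using assms(2)[of e] assms(1) that by auto
    then show ?thesis by blast
  qed
  also have "{e\<in>F. snd (es ! e) = v} = F \<inter> B"
  proof -
    have "snd (es ! e) = v \<longleftrightarrow> e \<in> B" if "e \<in> F" for e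
      using assms(3)[of e] assms(1) that by auto
    then show ?thesis by blast
  qed
  finally show ?thesis unfolding bdry_def by simp
qed

lemma conn_closed:
  assumes "conn es F x y"
    and "\<And>e. e \<in> F \<Longrightarrow> fst (es ! e) \<in> S \<longleftrightarrow> snd (es ! e) \<in> S"
  shows "x \<in> S \<longleftrightarrow> y \<in> S"
proof -
  have "(\<lambda>a b. \<exists>e\<in>F. es ! e = (a, b) \<or> es ! e = (b, a))\<^sup>*\<^sup>* x y" using assms(1) unfolding conn_def .
  then show ?thesis
  proof (induction rule: rtranclp_induct)
    case base
    then show ?case by simp
  next
    case (step y z)
    then obtain e where "e \<in> F" "es ! e = (y, z) \<or> es ! e = (z, y)" by blast
    then have "y \<in> S \<longleftrightarrow> z \<in> S" using assms(2)[of e] by auto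
    then show ?case using step by simp
  qed
qed

lemma nth_pairs_from: "i < p + 1 - a \<Longrightarrow> pairs_from j a p ! i = (j (2 * (a + i) - 1), j (2 * (a + i)))"
  unfolding pairs_from_def by (simp del: upt_Suc)

lemma length_pairs_from[simp]: "length (pairs_from j a p) = p + 1 - a"
  unfolding pairs_from_def by (simp del: upt_Suc)

lemma coarser_even:
  assumes U: "partition_on J U" and fin: "finite J" and ev: "\<And>u. u \<in> U \<Longrightarrow> even (card u)"
    and PP: "PP \<in> coarser J U" and P: "P \<in> PP"
  shows "0 < card P \<and> even (card P)"
proof -
  have pp: "partition_on J PP" and cov: "\<forall>u\<in>U. \<exists>P\<in>PP. u \<subseteq> P" using PP unfolding coarser_def by auto
  have Pne: "P \<noteq> {}" and PJ: "P \<subseteq> J" using pp P unfolding partition_on_def by auto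
  have Pdis: "\<And>P P'. P \<in> PP \<Longrightarrow> P' \<in> PP \<Longrightarrow> P \<noteq> P' \<Longrightarrow> P \<inter> P' = {}"
    using pp unfolding partition_on_def disjoint_def by blast
  have Udis: "\<And>u u'. u \<in> U \<Longrightarrow> u' \<in> U \<Longrightarrow> u \<noteq> u' \<Longrightarrow> u \<inter> u' = {}" and Uun: "\<Union>U = J"
    using U unfolding partition_on_def disjoint_def by blast+
  have key: "\<Union>{u \<in> U. u \<subseteq> P} = P"
  proof
    show "\<Union>{u \<in> U. u \<subseteq> P} \<subseteq> P" by blast
    show "P \<subseteq> \<Union>{u \<in> U. u \<subseteq> P}"
    proof
      fix x assume x: "x \<in> P"
      then obtain u where u: "u \<in> U" "x \<in> u" using Uun PJ by blast
      then obtain P' where P': "P' \<in> PP" "u \<subseteq> P'" using cov by blast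
      have "x \<in> P'" using u P' by blast
      then have "P' = P" using Pdis[OF P'(1) P] x by (metis IntI empty_iff)
      then show "x \<in> \<Union>{u \<in> U. u \<subseteq> P}" using u P' by blast
    qed
  qed
  have pw: "pairwise disjnt {u \<in> U. u \<subseteq> P}"
    unfolding pairwise_def disjnt_def using Udis by auto
  have finu: "finite u" if "u \<in> {u \<in> U. u \<subseteq> P}" for u
  proof -
    have "u \<subseteq> J" using that Uun by auto
    then show ?thesis using fin finite_subset by auto
  qed
  have "card P = (\<Sum>u\<in>{u \<in> U. u \<subseteq> P}. card u)"
    using card_Union_disjoint[OF pw finu] unfolding key .
  moreover have "even (\<Sum>u\<in>{u \<in> U. u \<subseteq> P}. card u)" by (rule dvd_sum) (use ev in auto)
  moreover have "card P > 0" using Pne fin PJ finite_subset card_gt_0_iff by metis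
  ultimately show ?thesis by simp
qed



locale KIloc =
  fixes p :: nat and j :: "nat \<Rightarrow> 'v" and v0 :: 'v
  assumes p1: "1 \<le> p" and inj: "inj_on j {1..2*p}" and v0: "v0 \<notin> j ` {1..2*p}"
begin

abbreviation "es \<equiv> KI_edges p j v0"
abbreviation "JJ \<equiv> j ` {1..2*p}"
definition rep :: "nat \<Rightarrow> 'v" where "rep e = j (2*e+2)"
definition unit :: "nat \<Rightarrow> 'v set" where "unit e = {j (2*e+1), j (2*e+2)}"
definition UU where "UU = unit ` {0..<p}"

lemma len: "length es = p"
  using p1 unfolding KI_edges_def by simp

lemma nth0: "es ! 0 = (j 2, v0)"
  unfolding KI_edges_def by simp

lemma nthS: "1 \<le> e \<Longrightarrow> e < p \<Longrightarrow> es ! e = (j (2*e+1), j (2*e+2))"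
proof -
  assume e: "1 \<le> e" "e < p"
  have "es ! e = pairs_from j 2 p ! (e - 1)"
    unfolding KI_edges_def using e by (simp add: nth_append)
  also have "\<dots> = (j (2 * (2 + (e - 1)) - 1), j (2 * (2 + (e - 1))))"
    using e by (intro nth_pairs_from) simp
  finally have "es ! e = (j (2 * (2 + (e - 1)) - 1), j (2 * (2 + (e - 1))))" .
  moreover have "2 * (2 + (e - 1)) - 1 = 2*e+1" "2 * (2 + (e - 1)) = 2*e+2" using e by auto
  ultimately show ?thesis by simp
qed

lemma jeq: "a \<in> {1..2*p} \<Longrightarrow> b \<in> {1..2*p} \<Longrightarrow> j a = j b \<longleftrightarrow> a = b"
  using inj by (meson inj_on_eq_iff)

lemma jv0: "a \<in> {1..2*p} \<Longrightarrow> j a \<noteq> v0"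
  using v0 by auto

lemma nat_par[simp]: "Suc (2*a) \<noteq> 2*b" "2*b \<noteq> Suc (2*a)" for a b :: nat
  by presburger+

lemma fst_es: "e < p \<Longrightarrow> fst (es ! e) = (if e = 0 then j 2 else j (2*e+1))"
  by (cases "e = 0") (auto simp: nth0 nthS)
lemma snd_es: "e < p \<Longrightarrow> snd (es ! e) = (if e = 0 then v0 else j (2*e+2))"
  by (cases "e = 0") (auto simp: nth0 nthS)

lemma b_v0: "F \<subseteq> {0..<p} \<Longrightarrow> v0 \<in> bdry es F \<longleftrightarrow> 0 \<in> F"
proof -
  assume F: "F \<subseteq> {0..<p}"
  have "v0 \<in> bdry es F \<longleftrightarrow> odd (card (F \<inter> {}) + card (F \<inter> {0}))"
    by (rule bdry_AB) (use F in \<open>auto simp: len fst_es snd_es jv0\<close>)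
  then show ?thesis by (simp add: Int_insert_right split: if_splits)
qed

lemma b_j2: "F \<subseteq> {0..<p} \<Longrightarrow> j 2 \<in> bdry es F \<longleftrightarrow> 0 \<in> F"
proof -
  assume F: "F \<subseteq> {0..<p}"
  have "j 2 \<in> bdry es F \<longleftrightarrow> odd (card (F \<inter> {0}) + card (F \<inter> {}))"
  proof (rule bdry_AB)
    show "fst (es ! e) = j 2 \<longleftrightarrow> e \<in> {0}" if "e < length es" for e
      using that p1 by (auto simp: len fst_es jeq)
    show "snd (es ! e) = j 2 \<longleftrightarrow> e \<in> {}" if "e < length es" for e
      using that p1 jv0[of 2] by (auto simp: len snd_es jeq)
  qed (use F len in auto)
  then show ?thesis by (simp add: Int_insert_right split: if_splits)
qed

lemma b_even: "F \<subseteq> {0..<p} \<Longrightarrow> 1 \<le> e \<Longrightarrow> e < p \<Longrightarrow> j (2*e+2) \<in> bdry es F \<longleftrightarrow> e \<in> F"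
proof -
  assume F: "F \<subseteq> {0..<p}" and e: "1 \<le> e" "e < p"
  have "j (2*e+2) \<in> bdry es F \<longleftrightarrow> odd (card (F \<inter> {}) + card (F \<inter> {e}))"
  proof (rule bdry_AB)
    show "fst (es ! e') = j (2*e+2) \<longleftrightarrow> e' \<in> {}" if "e' < length es" for e'
      using that e by (auto simp: len fst_es jeq)
    show "snd (es ! e') = j (2*e+2) \<longleftrightarrow> e' \<in> {e}" if "e' < length es" for e'
      using that e jv0[of "2*e+2"] by (auto simp: len snd_es jeq)
  qed (use F len in auto)
  then show ?thesis by (simp add: Int_insert_right split: if_splits)
qed

lemma b_rep: "F \<subseteq> {0..<p} \<Longrightarrow> e < p \<Longrightarrow> rep e \<in> bdry es F \<longleftrightarrow> e \<in> F"
proof (cases "e = 0")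
  case True
  have "rep e = j 2" unfolding rep_def True by (simp add: numeral_2_eq_2)
  then show "F \<subseteq> {0..<p} \<Longrightarrow> e < p \<Longrightarrow> rep e \<in> bdry es F \<longleftrightarrow> e \<in> F" using b_j2 True by simp
next
  case False
  then show "F \<subseteq> {0..<p} \<Longrightarrow> e < p \<Longrightarrow> rep e \<in> bdry es F \<longleftrightarrow> e \<in> F" using b_even[of F e] unfolding rep_def by simp
qed

lemma b_odd: "F \<subseteq> {0..<p} \<Longrightarrow> 1 \<le> e \<Longrightarrow> e < p \<Longrightarrow> j (2*e+1) \<in> bdry es F \<longleftrightarrow> e \<in> F"
proof -
  assume F: "F \<subseteq> {0..<p}" and e: "1 \<le> e" "e < p"
  have "j (2*e+1) \<in> bdry es F \<longleftrightarrow> odd (card (F \<inter> {e}) + card (F \<inter> {}))"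
  proof (rule bdry_AB)
    show "fst (es ! e') = j (2*e+1) \<longleftrightarrow> e' \<in> {e}" if "e' < length es" for e'
      using that e by (auto simp: len fst_es jeq)
    show "snd (es ! e') = j (2*e+1) \<longleftrightarrow> e' \<in> {}" if "e' < length es" for e'
      using that e jv0[of "2*e+1"] by (auto simp: len snd_es jeq)
  qed (use F len in auto)
  then show ?thesis by (simp add: Int_insert_right split: if_splits)
qed

lemma b_j1: "F \<subseteq> {0..<p} \<Longrightarrow> j 1 \<notin> bdry es F"
proof -
  assume F: "F \<subseteq> {0..<p}"
  have "j 1 \<in> bdry es F \<longleftrightarrow> odd (card (F \<inter> {}) + card (F \<inter> {}))"
  proof (rule bdry_AB)
    show "fst (es ! e') = j 1 \<longleftrightarrow> e' \<in> {}" if "e' < length es" for e'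
      using that p1 by (auto simp: len fst_es jeq)
    show "snd (es ! e') = j 1 \<longleftrightarrow> e' \<in> {}" if "e' < length es" for e'
      using that p1 jv0[of 1] by (auto simp: len snd_es jeq)
  qed (use F len in auto)
  then show ?thesis by (simp add: Int_insert_right split: if_splits)
qed

lemma b_other: "F \<subseteq> {0..<p} \<Longrightarrow> v \<notin> JJ \<Longrightarrow> v \<noteq> v0 \<Longrightarrow> v \<notin> bdry es F"
proof -
  assume F: "F \<subseteq> {0..<p}" and v: "v \<notin> JJ" "v \<noteq> v0"
  have "v \<in> bdry es F \<longleftrightarrow> odd (card (F \<inter> {}) + card (F \<inter> {}))"
  proof (rule bdry_AB)
    show "fst (es ! e') = v \<longleftrightarrow> e' \<in> {}" if "e' < length es" for e'
      using that p1 v by (auto simp: len fst_es)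
    show "snd (es ! e') = v \<longleftrightarrow> e' \<in> {}" if "e' < length es" for e'
      using that p1 v by (auto simp: len snd_es)
  qed (use F len in auto)
  then show ?thesis by (simp add: Int_insert_right split: if_splits)
qed

lemma vcases:
  assumes "k \<in> {1..2*p}"
  obtains "k = 1" | e where "k = 2*e+2" "e < p" | e where "k = 2*e+1" "1 \<le> e" "e < p"
proof -
  consider "k = 1" | "even k" | "odd k" "k \<noteq> 1" by blast
  then show ?thesis
  proof cases
    case 2
    then obtain m where m: "k = 2*m" by (metis evenE)
    then have "m \<ge> 1" using assms by auto
    then have "k = 2*(m-1)+2" "m - 1 < p" using m assms by auto
    then show ?thesis using that by blast
  next
    case 3
    then obtain e where e: "k = 2*e+1" by (metis oddE)
    then have "1 \<le> e" "e < p" using assms 3 by auto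
    then show ?thesis using that e by blast
  qed (use that in auto)
qed

lemma A1: "e < length es \<Longrightarrow> rep e \<in> JJ"
  unfolding rep_def len by auto

lemma A2: "F \<subseteq> {0..<length es} \<Longrightarrow> e < length es \<Longrightarrow> rep e \<in> bdry es F \<longleftrightarrow> e \<in> F"
  using b_rep unfolding len by blast

lemma A3: "e < length es \<Longrightarrow> rep e \<noteq> j 1 \<and> rep e \<noteq> v0"
  unfolding rep_def len using jeq[of "2*e+2" 1] jv0[of "2*e+2"] by auto

lemma unit_inter: "e < p \<Longrightarrow> e' < p \<Longrightarrow> x \<in> unit e \<Longrightarrow> x \<in> unit e' \<Longrightarrow> e = e'"
  unfolding unit_def by (auto simp: jeq)

lemma UU_part: "partition_on JJ UU"
proof (rule partition_onI)
  show "\<Union>UU = JJ"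
  proof
    show "\<Union>UU \<subseteq> JJ" unfolding UU_def unit_def by auto
    show "JJ \<subseteq> \<Union>UU"
    proof
      fix v assume "v \<in> JJ"
      then obtain k where k: "k \<in> {1..2*p}" "v = j k" by auto
      from k(1) show "v \<in> \<Union>UU"
      proof (cases rule: vcases)
        case 1
        have "v \<in> unit 0" using 1 k by (simp add: unit_def)
        moreover have "unit 0 \<in> UU" using p1 by (simp add: UU_def)
        ultimately show ?thesis by blast
      next
        case (2 e)
        have "v \<in> unit e" using 2 k by (simp add: unit_def)
        moreover have "unit e \<in> UU" using 2 by (simp add: UU_def)
        ultimately show ?thesis by blast
      next
        case (3 e)
        have "v \<in> unit e" using 3 k by (simp add: unit_def)
        moreover have "unit e \<in> UU" using 3 by (simp add: UU_def)
        ultimately show ?thesis by blast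
      qed
    qed
  qed
  show "\<And>u u'. u \<in> UU \<Longrightarrow> u' \<in> UU \<Longrightarrow> u \<noteq> u' \<Longrightarrow> disjnt u u'"
    unfolding UU_def disjnt_def using unit_inter by fastforce
  show "{} \<notin> UU" unfolding UU_def unit_def by auto
qed

lemma UU_even: "u \<in> UU \<Longrightarrow> even (card u)"
  unfolding UU_def unit_def by (auto simp: jeq)

lemma card_UU: "card UU = p"
proof -
  have "inj_on unit {0..<p}"
  proof (rule inj_onI)
    fix e e' assume "e \<in> {0..<p}" "e' \<in> {0..<p}" "unit e = unit e'"
    then show "e = e'" using unit_inter[of e e' "j (2*e+1)"] unfolding unit_def by auto
  qed
  then show ?thesis unfolding UU_def by (simp add: card_image)
qed

definition qf :: "'v set set \<Rightarrow> 'v set" where "qf PP = (THE P. P \<in> PP \<and> j 1 \<in> P)"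

abbreviation "RR P \<equiv> Rset (length es) rep P"

lemma RR_sub: "RR P \<subseteq> {0..<p}" unfolding Rset_def len by auto
lemma RR_mem: "e \<in> RR P \<longleftrightarrow> e < p \<and> rep e \<in> P" unfolding Rset_def len by auto

lemma bv0: "v0 \<in> bdry es (RR P) \<longleftrightarrow> j 2 \<in> P"
  using b_v0[OF RR_sub] RR_mem[of 0] p1 unfolding rep_def by (simp add: numeral_2_eq_2)
lemma bj1: "j 1 \<notin> bdry es (RR P)" using b_j1[OF RR_sub] .
lemma beven: "e < p \<Longrightarrow> j (2*e+2) \<in> bdry es (RR P) \<longleftrightarrow> j (2*e+2) \<in> P"
  using b_rep[OF RR_sub] RR_mem unfolding rep_def by simp
lemma bodd: "1 \<le> e \<Longrightarrow> e < p \<Longrightarrow> j (2*e+1) \<in> bdry es (RR P) \<longleftrightarrow> j (2*e+2) \<in> P"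
  using b_odd[OF RR_sub] RR_mem unfolding rep_def by simp
lemma bother: "v \<notin> JJ \<Longrightarrow> v \<noteq> v0 \<Longrightarrow> v \<notin> bdry es (RR P)"
  using b_other[OF RR_sub] by blast

lemma char: "gcond JJ (j 1) v0 es rep PP Q \<longleftrightarrow> PP \<in> coarser JJ UU \<and> Q = qf PP"
proof
  assume g: "gcond JJ (j 1) v0 es rep PP Q"
  have part: "partition_on JJ PP" and QP: "Q \<in> PP"
    and bP: "\<And>P. P \<in> PP - {Q} \<Longrightarrow> bdry es (RR P) = P"
    and bQ: "bdry es (RR Q) = (Q - {j 1, v0}) \<union> ({j 1, v0} - Q)"
    using g unfolding gcond_def by auto
  have PJ: "\<And>P. P \<in> PP \<Longrightarrow> P \<subseteq> JJ" using part unfolding partition_on_def by blast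
  have uniq: "\<And>P P' x. P \<in> PP \<Longrightarrow> P' \<in> PP \<Longrightarrow> x \<in> P \<Longrightarrow> x \<in> P' \<Longrightarrow> P = P'"
    using part unfolding partition_on_def disjoint_def by blast
  have exb: "\<And>x. x \<in> JJ \<Longrightarrow> \<exists>P\<in>PP. x \<in> P" using part unfolding partition_on_def by blast
  have j1Q: "j 1 \<in> Q"
  proof (rule ccontr)
    assume "j 1 \<notin> Q"
    then have "j 1 \<in> bdry es (RR Q)" unfolding bQ by simp
    then show False using bj1 by simp
  qed
  have v0J: "v0 \<notin> JJ" using v0 .
  have cov: "\<forall>u\<in>UU. \<exists>P\<in>PP. u \<subseteq> P"
  proof
    fix u assume "u \<in> UU"
    then obtain e where e: "e < p" "u = unit e" unfolding UU_def by auto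
    have "j (2*e+2) \<in> JJ" using e by auto
    then obtain P where P: "P \<in> PP" "j (2*e+2) \<in> P" using exb by blast
    show "\<exists>P\<in>PP. u \<subseteq> P"
    proof (cases "e = 0")
      case True
      have "j 2 \<in> P" using P True by (simp add: numeral_2_eq_2)
      then have "v0 \<in> bdry es (RR P)" using bv0 by simp
      moreover have "P = Q"
      proof (rule ccontr)
        assume "P \<noteq> Q"
        then have "bdry es (RR P) = P" using bP P by simp
        then show False using \<open>v0 \<in> bdry es (RR P)\<close> PJ[OF P(1)] v0J by auto
      qed
      ultimately have "unit e \<subseteq> P" using j1Q \<open>j 2 \<in> P\<close> True unfolding unit_def by (simp add: numeral_2_eq_2)
      then show ?thesis using P e by blast
    next
      case False
      then have e1: "1 \<le> e" by simp
      have inb: "j (2*e+1) \<in> bdry es (RR P)" using bodd[OF e1 e(1)] P by simp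
      have ne: "j (2*e+1) \<noteq> j 1" "j (2*e+1) \<noteq> v0" using e e1 jeq[of "2*e+1" 1] jv0[of "2*e+1"] by auto
      have "j (2*e+1) \<in> P"
      proof (cases "P = Q")
        case True
        then show ?thesis using inb bQ ne by auto
      next
        case False
        then show ?thesis using inb bP P by auto
      qed
      then show ?thesis using P e unfolding unit_def by auto
    qed
  qed
  have "Q = qf PP" unfolding qf_def
    by (rule the_equality[symmetric]) (use QP j1Q uniq in auto)
  then show "PP \<in> coarser JJ UU \<and> Q = qf PP" using part cov unfolding coarser_def by auto
next
  assume a: "PP \<in> coarser JJ UU \<and> Q = qf PP"
  have part: "partition_on JJ PP" and cov: "\<forall>u\<in>UU. \<exists>P\<in>PP. u \<subseteq> P" and Qd: "Q = qf PP"
    using a unfolding coarser_def by auto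
  have PJ: "\<And>P. P \<in> PP \<Longrightarrow> P \<subseteq> JJ" using part unfolding partition_on_def by blast
  have uniq: "\<And>P P' x. P \<in> PP \<Longrightarrow> P' \<in> PP \<Longrightarrow> x \<in> P \<Longrightarrow> x \<in> P' \<Longrightarrow> P = P'"
    using part unfolding partition_on_def disjoint_def by blast
  have exb: "\<And>x. x \<in> JJ \<Longrightarrow> \<exists>P\<in>PP. x \<in> P" using part unfolding partition_on_def by blast
  have "j 1 \<in> JJ" using p1 by auto
  then have ex1: "\<exists>!P. P \<in> PP \<and> j 1 \<in> P" using exb uniq by blast
  have QP: "Q \<in> PP" and j1Q: "j 1 \<in> Q" using theI'[OF ex1] Qd unfolding qf_def by auto
  have same: "j (2*e+1) \<in> P \<longleftrightarrow> j (2*e+2) \<in> P" if "P \<in> PP" "e < p" for P e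
  proof -
    have "unit e \<in> UU" using that unfolding UU_def by auto
    then obtain P' where "P' \<in> PP" "unit e \<subseteq> P'" using cov by blast
    then show ?thesis using uniq[OF that(1) \<open>P' \<in> PP\<close>] unfolding unit_def by auto
  qed
  have v0J: "v0 \<notin> JJ" using v0 .
  have vert: "v \<in> bdry es (RR P) \<longleftrightarrow> (v \<in> P \<and> v \<noteq> j 1) \<or> (v = v0 \<and> P = Q)" if P: "P \<in> PP" for P v
  proof (cases "v = v0")
    case True
    have "j 2 \<in> P \<longleftrightarrow> j 1 \<in> P" using same[OF P, of 0] p1 by (simp add: numeral_2_eq_2)
    also have "\<dots> \<longleftrightarrow> P = Q" using uniq[OF P QP] j1Q by auto
    finally show ?thesis using True bv0 PJ[OF P] v0J by auto
  next
    case False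
    show ?thesis
    proof (cases "v \<in> JJ")
      case True
      then obtain k where k: "k \<in> {1..2*p}" "v = j k" by auto
      from k(1) show ?thesis
      proof (cases rule: vcases)
        case 1
        then show ?thesis using k bj1 False by auto
      next
        case (2 e)
        have "j k \<noteq> j 1" using jeq[of k 1] k 2 p1 by auto
        then show ?thesis using k 2 beven[of e P] False by auto
      next
        case (3 e)
        have "j k \<noteq> j 1" using jeq[of k 1] k 3 p1 by auto
        then show ?thesis using k 3 bodd[of e P] same[OF P 3(3)] False by auto
      qed
    next
      case False
      then show ?thesis using bother[of v P] \<open>v \<noteq> v0\<close> PJ[OF P] by auto
    qed
  qed
  have ev: "\<forall>P\<in>PP. 0 < card P \<and> even (card P)"
    using coarser_even[OF UU_part _ UU_even] a by auto
  have bP: "\<forall>P\<in>PP - {Q}. bdry es (RR P) = P"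
  proof
    fix P assume P: "P \<in> PP - {Q}"
    then have "j 1 \<notin> P" using uniq QP j1Q by blast
    then show "bdry es (RR P) = P" using vert P by auto
  qed
  have bQ: "bdry es (RR Q) = (Q - {j 1, v0}) \<union> ({j 1, v0} - Q)"
    using vert[OF QP] j1Q PJ[OF QP] v0J by auto
  have nc: "\<not> conn es (RR Q) (j 1) v0"
  proof
    assume c: "conn es (RR Q) (j 1) v0"
    have "\<And>e. e \<in> RR Q \<Longrightarrow> fst (es ! e) \<in> {j 1} \<longleftrightarrow> snd (es ! e) \<in> {j 1}"
    proof -
      fix e assume "e \<in> RR Q"
      then have e: "e < p" using RR_mem by auto
      have "fst (es ! e) \<noteq> j 1" using e jeq[of 2 1] jeq[of "2*e+1" 1] p1 by (auto simp: fst_es)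
      moreover have "snd (es ! e) \<noteq> j 1" using e jeq[of "2*e+2" 1] jv0[of 1] p1 by (auto simp: snd_es)
      ultimately show "fst (es ! e) \<in> {j 1} \<longleftrightarrow> snd (es ! e) \<in> {j 1}" by auto
    qed
    from conn_closed[OF c this] show False using jv0[of 1] p1 by auto
  qed
  show "gcond JJ (j 1) v0 es rep PP Q" unfolding gcond_def using part ev QP bP bQ nc by auto
qed

lemma result: "Rsum p JJ (j 1) v0 es = (if p = 1 then 1 else 0)"
proof -
  have "Rsum p JJ (j 1) v0 es = (\<Sum>PP\<in>coarser JJ UU. w (card PP))"
    by (rule Rsum_reduce[OF A1 A2 A3 char])
  also have "\<dots> = (\<Sum>\<pi>\<in>{\<pi>. partition_on UU \<pi>}. w (card \<pi>))"
    by (rule coarser_sum[OF UU_part]) simp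
  also have "\<dots> = (if card UU = 1 then 1 else 0)"
    by (rule part_sum) (use card_UU p1 in \<open>auto intro: card_ge_0_finite\<close>)
  finally show ?thesis using card_UU by simp
qed

end



locale KIIloc =
  fixes p :: nat and j :: "nat \<Rightarrow> 'v" and u0 v0 :: 'v
  assumes p1: "1 \<le> p" and inj: "inj_on j {1..2*p}" and v0: "v0 \<notin> j ` {1..2*p}"
    and u0: "u0 \<notin> j ` {1..2*p}" and uv: "u0 \<noteq> v0"
begin

abbreviation "es \<equiv> KII_edges p j u0 v0"
abbreviation "JJ \<equiv> j ` {1..2*p}"
definition rep :: "nat \<Rightarrow> 'v" where "rep e = (case e of 0 \<Rightarrow> j 1 | Suc d \<Rightarrow> j (2*d+2))"
definition unit :: "nat \<Rightarrow> 'v set" where "unit e = {j (2*e+1), j (2*e+2)}"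
definition UU where "UU = unit ` {0..<p}"

lemma len: "length es = p + 1"
  using p1 unfolding KII_edges_def by simp

lemma nth0: "es ! 0 = (j 1, u0)"
  unfolding KII_edges_def by simp
lemma nth1: "es ! Suc 0 = (j 2, v0)"
  unfolding KII_edges_def by simp

lemma nthS: "1 \<le> d \<Longrightarrow> d < p \<Longrightarrow> es ! Suc d = (j (2*d+1), j (2*d+2))"
proof -
  assume e: "1 \<le> d" "d < p"
  have "es ! Suc d = pairs_from j 2 p ! (d - 1)"
    unfolding KII_edges_def using e by (simp add: nth_append)
  also have "\<dots> = (j (2 * (2 + (d - 1)) - 1), j (2 * (2 + (d - 1))))"
    using e by (intro nth_pairs_from) simp
  finally have "es ! Suc d = (j (2 * (2 + (d - 1)) - 1), j (2 * (2 + (d - 1))))" .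
  moreover have "2 * (2 + (d - 1)) - 1 = 2*d+1" "2 * (2 + (d - 1)) = 2*d+2" using e by auto
  ultimately show ?thesis by simp
qed

lemma jeq: "a \<in> {1..2*p} \<Longrightarrow> b \<in> {1..2*p} \<Longrightarrow> j a = j b \<longleftrightarrow> a = b"
  using inj by (meson inj_on_eq_iff)

lemma jv0: "a \<in> {1..2*p} \<Longrightarrow> j a \<noteq> v0"
  using v0 by auto
lemma ju0: "a \<in> {1..2*p} \<Longrightarrow> j a \<noteq> u0"
  using u0 by auto

lemma jneq: "1 \<le> a \<Longrightarrow> a \<le> 2*p \<Longrightarrow> j a \<noteq> u0" "1 \<le> a \<Longrightarrow> a \<le> 2*p \<Longrightarrow> u0 \<noteq> j a"
  "1 \<le> a \<Longrightarrow> a \<le> 2*p \<Longrightarrow> j a \<noteq> v0" "1 \<le> a \<Longrightarrow> a \<le> 2*p \<Longrightarrow> v0 \<noteq> j a"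
  using u0 v0 by auto

lemma nat_par[simp]: "Suc (2*a) \<noteq> 2*b" "2*b \<noteq> Suc (2*a)" for a b :: nat
  by presburger+

lemma fst_es: "d < p \<Longrightarrow> fst (es ! Suc d) = (if d = 0 then j 2 else j (2*d+1))"
  by (cases "d = 0") (auto simp: nth1 nthS)
lemma snd_es: "d < p \<Longrightarrow> snd (es ! Suc d) = (if d = 0 then v0 else j (2*d+2))"
  by (cases "d = 0") (auto simp: nth1 nthS)

lemma bAB:
  assumes "F \<subseteq> {0..<p+1}"
    and "fst (es ! 0) = v \<longleftrightarrow> 0 \<in> A" "\<And>d. d < p \<Longrightarrow> fst (es ! Suc d) = v \<longleftrightarrow> Suc d \<in> A"
    and "snd (es ! 0) = v \<longleftrightarrow> 0 \<in> B" "\<And>d. d < p \<Longrightarrow> snd (es ! Suc d) = v \<longleftrightarrow> Suc d \<in> B"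
  shows "v \<in> bdry es F \<longleftrightarrow> odd (card (F \<inter> A) + card (F \<inter> B))"
proof (rule bdry_AB)
  show "F \<subseteq> {0..<length es}" using assms(1) len by simp
  show "fst (es ! e) = v \<longleftrightarrow> e \<in> A" if "e < length es" for e
    using that assms(2,3) len by (cases e) auto
  show "snd (es ! e) = v \<longleftrightarrow> e \<in> B" if "e < length es" for e
    using that assms(4,5) len by (cases e) auto
qed

lemma b_u0: "F \<subseteq> {0..<p+1} \<Longrightarrow> u0 \<in> bdry es F \<longleftrightarrow> 0 \<in> F"
proof -
  assume F: "F \<subseteq> {0..<p+1}"
  have "u0 \<in> bdry es F \<longleftrightarrow> odd (card (F \<inter> {}) + card (F \<inter> {0}))"
    by (rule bAB[OF F]) (use p1 ju0 uv in \<open>auto simp: jneq nth0 fst_es snd_es\<close>)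
  then show ?thesis by (simp add: Int_insert_right split: if_splits)
qed

lemma b_v0: "F \<subseteq> {0..<p+1} \<Longrightarrow> v0 \<in> bdry es F \<longleftrightarrow> Suc 0 \<in> F"
proof -
  assume F: "F \<subseteq> {0..<p+1}"
  have "v0 \<in> bdry es F \<longleftrightarrow> odd (card (F \<inter> {}) + card (F \<inter> {Suc 0}))"
    by (rule bAB[OF F]) (use p1 jv0 uv in \<open>auto simp: jneq nth0 fst_es snd_es\<close>)
  then show ?thesis by (simp add: Int_insert_right split: if_splits)
qed

lemma b_j1: "F \<subseteq> {0..<p+1} \<Longrightarrow> j 1 \<in> bdry es F \<longleftrightarrow> 0 \<in> F"
proof -
  assume F: "F \<subseteq> {0..<p+1}"
  have "j 1 \<in> bdry es F \<longleftrightarrow> odd (card (F \<inter> {0}) + card (F \<inter> {}))"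
    by (rule bAB[OF F]) (use p1 jv0 ju0 in \<open>auto simp: jneq nth0 fst_es snd_es jeq\<close>)
  then show ?thesis by (simp add: Int_insert_right split: if_splits)
qed

lemma b_even: "F \<subseteq> {0..<p+1} \<Longrightarrow> d < p \<Longrightarrow> j (2*d+2) \<in> bdry es F \<longleftrightarrow> Suc d \<in> F"
proof -
  assume F: "F \<subseteq> {0..<p+1}" and d: "d < p"
  have "j (2*d+2) \<in> bdry es F \<longleftrightarrow> odd (card (F \<inter> (if d = 0 then {Suc d} else {})) + card (F \<inter> (if d = 0 then {} else {Suc d})))"
    by (rule bAB[OF F]) (use d jv0 ju0 in \<open>auto simp: jneq nth0 fst_es snd_es jeq\<close>)
  then show ?thesis by (simp add: Int_insert_right split: if_splits)
qed

lemma b_odd: "F \<subseteq> {0..<p+1} \<Longrightarrow> 1 \<le> d \<Longrightarrow> d < p \<Longrightarrow> j (2*d+1) \<in> bdry es F \<longleftrightarrow> Suc d \<in> F"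
proof -
  assume F: "F \<subseteq> {0..<p+1}" and d: "1 \<le> d" "d < p"
  have "j (2*d+1) \<in> bdry es F \<longleftrightarrow> odd (card (F \<inter> {Suc d}) + card (F \<inter> {}))"
    by (rule bAB[OF F]) (use d jv0 ju0 in \<open>auto simp: jneq nth0 fst_es snd_es jeq\<close>)
  then show ?thesis by (simp add: Int_insert_right split: if_splits)
qed

lemma b_other: "F \<subseteq> {0..<p+1} \<Longrightarrow> v \<notin> JJ \<Longrightarrow> v \<noteq> v0 \<Longrightarrow> v \<noteq> u0 \<Longrightarrow> v \<notin> bdry es F"
proof -
  assume F: "F \<subseteq> {0..<p+1}" and v: "v \<notin> JJ" "v \<noteq> v0" "v \<noteq> u0"
  have "v \<in> bdry es F \<longleftrightarrow> odd (card (F \<inter> {}) + card (F \<inter> {}))"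
    by (rule bAB[OF F]) (use v p1 in \<open>auto simp: jneq nth0 fst_es snd_es\<close>)
  then show ?thesis by auto
qed

lemma b_rep: "F \<subseteq> {0..<p+1} \<Longrightarrow> e < p + 1 \<Longrightarrow> rep e \<in> bdry es F \<longleftrightarrow> e \<in> F"
proof -
  assume F: "F \<subseteq> {0..<p+1}" and e: "e < p + 1"
  show ?thesis
  proof (cases e)
    case 0 then show ?thesis using b_j1[OF F] by (simp add: rep_def)
  next
    case (Suc d) then show ?thesis using b_even[OF F, of d] e by (simp add: rep_def)
  qed
qed

lemma vcases:
  assumes "k \<in> {1..2*p}"
  obtains "k = 1" | e where "k = 2*e+2" "e < p" | e where "k = 2*e+1" "1 \<le> e" "e < p"
proof -
  consider "k = 1" | "even k" | "odd k" "k \<noteq> 1" by blast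
  then show ?thesis
  proof cases
    case 2
    then obtain m where m: "k = 2*m" by (metis evenE)
    then have "m \<ge> 1" using assms by auto
    then have "k = 2*(m-1)+2" "m - 1 < p" using m assms by auto
    then show ?thesis using that by blast
  next
    case 3
    then obtain e where e: "k = 2*e+1" by (metis oddE)
    then have "1 \<le> e" "e < p" using assms 3 by auto
    then show ?thesis using that e by blast
  qed (use that in auto)
qed

lemma unit_inter: "e < p \<Longrightarrow> e' < p \<Longrightarrow> x \<in> unit e \<Longrightarrow> x \<in> unit e' \<Longrightarrow> e = e'"
  unfolding unit_def by (auto simp: jeq)

lemma UU_part: "partition_on JJ UU"
proof (rule partition_onI)
  show "\<Union>UU = JJ"
  proof
    show "\<Union>UU \<subseteq> JJ" unfolding UU_def unit_def by auto
    show "JJ \<subseteq> \<Union>UU"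
    proof
      fix v assume "v \<in> JJ"
      then obtain k where k: "k \<in> {1..2*p}" "v = j k" by auto
      from k(1) show "v \<in> \<Union>UU"
      proof (cases rule: vcases)
        case 1
        have "v \<in> unit 0" using 1 k by (simp add: unit_def)
        moreover have "unit 0 \<in> UU" using p1 by (simp add: UU_def)
        ultimately show ?thesis by blast
      next
        case (2 e)
        have "v \<in> unit e" using 2 k by (simp add: unit_def)
        moreover have "unit e \<in> UU" using 2 by (simp add: UU_def)
        ultimately show ?thesis by blast
      next
        case (3 e)
        have "v \<in> unit e" using 3 k by (simp add: unit_def)
        moreover have "unit e \<in> UU" using 3 by (simp add: UU_def)
        ultimately show ?thesis by blast
      qed
    qed
  qed
  show "\<And>u u'. u \<in> UU \<Longrightarrow> u' \<in> UU \<Longrightarrow> u \<noteq> u' \<Longrightarrow> disjnt u u'"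
    unfolding UU_def disjnt_def using unit_inter by fastforce
  show "{} \<notin> UU" unfolding UU_def unit_def by auto
qed

lemma UU_even: "u \<in> UU \<Longrightarrow> even (card u)"
  unfolding UU_def unit_def by (auto simp: jeq)

lemma card_UU: "card UU = p"
proof -
  have "inj_on unit {0..<p}"
  proof (rule inj_onI)
    fix e e' assume "e \<in> {0..<p}" "e' \<in> {0..<p}" "unit e = unit e'"
    then show "e = e'" using unit_inter[of e e' "j (2*e+1)"] unfolding unit_def by auto
  qed
  then show ?thesis unfolding UU_def by (simp add: card_image)
qed

definition qf :: "'v set set \<Rightarrow> 'v set" where "qf PP = (THE P. P \<in> PP \<and> j 1 \<in> P)"

lemma A1: "e < length es \<Longrightarrow> rep e \<in> JJ"
  unfolding rep_def len using p1 by (cases e) auto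

lemma A2: "F \<subseteq> {0..<length es} \<Longrightarrow> e < length es \<Longrightarrow> rep e \<in> bdry es F \<longleftrightarrow> e \<in> F"
  using b_rep unfolding len by blast

lemma A3: "e < length es \<Longrightarrow> rep e \<noteq> u0 \<and> rep e \<noteq> v0"
  using A1 u0 v0 by metis

abbreviation "RR P \<equiv> Rset (length es) rep P"

lemma RR_sub: "RR P \<subseteq> {0..<p+1}" unfolding Rset_def len by auto
lemma RR_mem: "e \<in> RR P \<longleftrightarrow> e < p + 1 \<and> rep e \<in> P" unfolding Rset_def len by auto

lemma bu0: "u0 \<in> bdry es (RR P) \<longleftrightarrow> j 1 \<in> P"
  using b_u0[OF RR_sub] RR_mem[of 0] unfolding rep_def by simp
lemma bv0: "v0 \<in> bdry es (RR P) \<longleftrightarrow> j 2 \<in> P"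
  using b_v0[OF RR_sub] RR_mem[of "Suc 0"] p1 unfolding rep_def by (simp add: numeral_2_eq_2)
lemma bj1: "j 1 \<in> bdry es (RR P) \<longleftrightarrow> j 1 \<in> P"
  using b_j1[OF RR_sub] RR_mem[of 0] unfolding rep_def by simp
lemma beven: "e < p \<Longrightarrow> j (2*e+2) \<in> bdry es (RR P) \<longleftrightarrow> j (2*e+2) \<in> P"
  using b_even[OF RR_sub] RR_mem[of "Suc e"] unfolding rep_def by simp
lemma bodd: "1 \<le> e \<Longrightarrow> e < p \<Longrightarrow> j (2*e+1) \<in> bdry es (RR P) \<longleftrightarrow> j (2*e+2) \<in> P"
  using b_odd[OF RR_sub] RR_mem[of "Suc e"] unfolding rep_def by simp
lemma bother: "v \<notin> JJ \<Longrightarrow> v \<noteq> v0 \<Longrightarrow> v \<noteq> u0 \<Longrightarrow> v \<notin> bdry es (RR P)"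
  using b_other[OF RR_sub] by blast

lemma char: "gcond JJ u0 v0 es rep PP Q \<longleftrightarrow> PP \<in> coarser JJ UU \<and> Q = qf PP"
proof
  assume g: "gcond JJ u0 v0 es rep PP Q"
  have part: "partition_on JJ PP" and QP: "Q \<in> PP"
    and bP: "\<And>P. P \<in> PP - {Q} \<Longrightarrow> bdry es (RR P) = P"
    and bQ0: "bdry es (RR Q) = (Q - {u0, v0}) \<union> ({u0, v0} - Q)"
    using g unfolding gcond_def by auto
  have PJ: "\<And>P. P \<in> PP \<Longrightarrow> P \<subseteq> JJ" using part unfolding partition_on_def by blast
  have uniq: "\<And>P P' x. P \<in> PP \<Longrightarrow> P' \<in> PP \<Longrightarrow> x \<in> P \<Longrightarrow> x \<in> P' \<Longrightarrow> P = P'"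
    using part unfolding partition_on_def disjoint_def by blast
  have exb: "\<And>x. x \<in> JJ \<Longrightarrow> \<exists>P\<in>PP. x \<in> P" using part unfolding partition_on_def by blast
  have bQ: "bdry es (RR Q) = Q \<union> {u0, v0}" using bQ0 PJ[OF QP] u0 v0 by auto
  have j1Q: "j 1 \<in> Q" using bQ bu0[of Q] by auto
  have j2Q: "j 2 \<in> Q" using bQ bv0[of Q] by auto
  have cov: "\<forall>u\<in>UU. \<exists>P\<in>PP. u \<subseteq> P"
  proof
    fix u assume "u \<in> UU"
    then obtain e where e: "e < p" "u = unit e" unfolding UU_def by auto
    show "\<exists>P\<in>PP. u \<subseteq> P"
    proof (cases "e = 0")
      case True
      have "unit e \<subseteq> Q" using j1Q j2Q True unfolding unit_def by (simp add: numeral_2_eq_2)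
      then show ?thesis using QP e by blast
    next
      case False
      then have e1: "1 \<le> e" by simp
      have "j (2*e+2) \<in> JJ" using e by auto
      then obtain P where P: "P \<in> PP" "j (2*e+2) \<in> P" using exb by blast
      have inb: "j (2*e+1) \<in> bdry es (RR P)" using bodd[OF e1 e(1)] P by simp
      have ne: "j (2*e+1) \<noteq> u0" "j (2*e+1) \<noteq> v0" using e e1 jneq[of "2*e+1"] by auto
      have "j (2*e+1) \<in> P"
      proof (cases "P = Q")
        case True
        then show ?thesis using inb bQ ne by auto
      next
        case False
        then show ?thesis using inb bP P by auto
      qed
      then show ?thesis using P e unfolding unit_def by auto
    qed
  qed
  have "Q = qf PP" unfolding qf_def
    by (rule the_equality[symmetric]) (use QP j1Q uniq in auto)
  then show "PP \<in> coarser JJ UU \<and> Q = qf PP" using part cov unfolding coarser_def by auto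
next
  assume a: "PP \<in> coarser JJ UU \<and> Q = qf PP"
  have part: "partition_on JJ PP" and cov: "\<forall>u\<in>UU. \<exists>P\<in>PP. u \<subseteq> P" and Qd: "Q = qf PP"
    using a unfolding coarser_def by auto
  have PJ: "\<And>P. P \<in> PP \<Longrightarrow> P \<subseteq> JJ" using part unfolding partition_on_def by blast
  have uniq: "\<And>P P' x. P \<in> PP \<Longrightarrow> P' \<in> PP \<Longrightarrow> x \<in> P \<Longrightarrow> x \<in> P' \<Longrightarrow> P = P'"
    using part unfolding partition_on_def disjoint_def by blast
  have exb: "\<And>x. x \<in> JJ \<Longrightarrow> \<exists>P\<in>PP. x \<in> P" using part unfolding partition_on_def by blast
  have "j 1 \<in> JJ" using p1 by auto
  then have ex1: "\<exists>!P. P \<in> PP \<and> j 1 \<in> P" using exb uniq by blast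
  have QP: "Q \<in> PP" and j1Q: "j 1 \<in> Q" using theI'[OF ex1] Qd unfolding qf_def by auto
  have same: "j (2*e+1) \<in> P \<longleftrightarrow> j (2*e+2) \<in> P" if "P \<in> PP" "e < p" for P e
  proof -
    have "unit e \<in> UU" using that unfolding UU_def by auto
    then obtain P' where "P' \<in> PP" "unit e \<subseteq> P'" using cov by blast
    then show ?thesis using uniq[OF that(1) \<open>P' \<in> PP\<close>] unfolding unit_def by auto
  qed
  have vert: "v \<in> bdry es (RR P) \<longleftrightarrow> v \<in> P \<or> ((v = u0 \<or> v = v0) \<and> P = Q)" if P: "P \<in> PP" for P v
  proof -
    have j1P: "j 1 \<in> P \<longleftrightarrow> P = Q" using uniq[OF P QP] j1Q by auto
    have j2P: "j 2 \<in> P \<longleftrightarrow> j 1 \<in> P" using same[OF P, of 0] p1 by (simp add: numeral_2_eq_2)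
    consider "v = u0" | "v = v0" | "v \<in> JJ" | "v \<notin> JJ" "v \<noteq> u0" "v \<noteq> v0" by blast
    then show ?thesis
    proof cases
      case 1
      then show ?thesis using bu0 j1P PJ[OF P] u0 by auto
    next
      case 2
      then show ?thesis using bv0 j2P j1P PJ[OF P] v0 by auto
    next
      case 3
      have nuv: "v \<noteq> u0" "v \<noteq> v0" using 3 u0 v0 by auto
      from 3 obtain k where k: "k \<in> {1..2*p}" "v = j k" by auto
      from k(1) show ?thesis
      proof (cases rule: vcases)
        case 1
        then show ?thesis using k bj1 nuv by auto
      next
        case (2 e)
        then show ?thesis using k beven[of e P] nuv by auto
      next
        case (3 e)
        then show ?thesis using k bodd[of e P] same[OF P 3(3)] nuv by auto
      qed
    next
      case 4
      then show ?thesis using bother[of v P] PJ[OF P] by auto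
    qed
  qed
  have ev: "\<forall>P\<in>PP. 0 < card P \<and> even (card P)"
    using coarser_even[OF UU_part _ UU_even] a by auto
  have bP: "\<forall>P\<in>PP - {Q}. bdry es (RR P) = P"
    using vert by auto
  have bQ: "bdry es (RR Q) = (Q - {u0, v0}) \<union> ({u0, v0} - Q)"
    using vert[OF QP] PJ[OF QP] u0 v0 by auto
  have nc: "\<not> conn es (RR Q) u0 v0"
  proof
    assume c: "conn es (RR Q) u0 v0"
    have "\<And>e. e \<in> RR Q \<Longrightarrow> fst (es ! e) \<in> {j 2, v0} \<longleftrightarrow> snd (es ! e) \<in> {j 2, v0}"
    proof -
      fix e assume "e \<in> RR Q"
      then have e: "e < p + 1" using RR_mem by auto
      show "fst (es ! e) \<in> {j 2, v0} \<longleftrightarrow> snd (es ! e) \<in> {j 2, v0}"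
      proof (cases e)
        case 0
        then show ?thesis using p1 jeq[of 1 2] jneq[of 1] jneq[of 2] uv by (auto simp: nth0)
      next
        case (Suc d)
        then have d: "d < p" using e by simp
        show ?thesis
        proof (cases "d = 0")
          case True
          then show ?thesis using Suc by (simp add: nth1)
        next
          case False
          then show ?thesis using Suc d jeq[of "2*d+1" 2] jeq[of "2*d+2" 2] jneq[of "2*d+1"] jneq[of "2*d+2"]
            by (auto simp: fst_es snd_es)
        qed
      qed
    qed
    from conn_closed[OF c this] show False using uv u0 p1 by auto
  qed
  show "gcond JJ u0 v0 es rep PP Q" unfolding gcond_def using part ev QP bP bQ nc by auto
qed

lemma result: "Rsum p JJ u0 v0 es = (if p = 1 then 1 else 0)"
proof -
  have "Rsum p JJ u0 v0 es = (\<Sum>PP\<in>coarser JJ UU. w (card PP))"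
    by (rule Rsum_reduce[OF A1 A2 A3 char])
  also have "\<dots> = (\<Sum>\<pi>\<in>{\<pi>. partition_on UU \<pi>}. w (card \<pi>))"
    by (rule coarser_sum[OF UU_part]) simp
  also have "\<dots> = (if card UU = 1 then 1 else 0)"
    by (rule part_sum) (use card_UU p1 in \<open>auto intro: card_ge_0_finite\<close>)
  finally show ?thesis using card_UU by simp
qed

end



locale Hloc =
  fixes p :: nat and j :: "nat \<Rightarrow> 'v" and v0 :: 'v
  assumes p2: "2 \<le> p" and inj: "inj_on j {1..2*p}" and v0: "v0 \<notin> j ` {1..2*p}"
begin

abbreviation "es \<equiv> H_edges p j v0"
abbreviation "JJ \<equiv> j ` {1..2*p}"
definition rep :: "nat \<Rightarrow> 'v" where "rep e = (if e = 0 then j 2 else if e = 1 then j 3 else j (2*e))"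
definition unit :: "nat \<Rightarrow> 'v set" where "unit e = {j (2*e+1), j (2*e+2)}"

lemma len: "length es = p + 1"
  using p2 unfolding H_edges_def by simp

lemma nth0: "es ! 0 = (j 1, j 2)"
  unfolding H_edges_def by simp
lemma nth1: "es ! Suc 0 = (j 1, j 3)"
  unfolding H_edges_def by simp
lemma nth2: "es ! Suc (Suc 0) = (j 4, v0)"
  unfolding H_edges_def by simp

lemma nthS: "2 \<le> d \<Longrightarrow> d < p \<Longrightarrow> es ! Suc d = (j (2*d+1), j (2*d+2))"
proof -
  assume e: "2 \<le> d" "d < p"
  have "es ! Suc d = pairs_from j 3 p ! (d - 2)"
    unfolding H_edges_def using e by (simp add: nth_append numeral_2_eq_2)
  also have "\<dots> = (j (2 * (3 + (d - 2)) - 1), j (2 * (3 + (d - 2))))"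
    using e by (intro nth_pairs_from) simp
  also have "2 * (3 + (d - 2)) - 1 = 2*d+1" using e by arith
  also have "2 * (3 + (d - 2)) = 2*d+2" using e by arith
  finally show ?thesis .
qed

lemma jeq: "a \<in> {1..2*p} \<Longrightarrow> b \<in> {1..2*p} \<Longrightarrow> j a = j b \<longleftrightarrow> a = b"
  using inj by (meson inj_on_eq_iff)

lemma jneq: "1 \<le> a \<Longrightarrow> a \<le> 2*p \<Longrightarrow> j a \<noteq> v0" "1 \<le> a \<Longrightarrow> a \<le> 2*p \<Longrightarrow> v0 \<noteq> j a"
  using v0 by auto

lemma nat_par[simp]: "Suc (2*a) \<noteq> 2*b" "2*b \<noteq> Suc (2*a)" for a b :: nat
  by presburger+

lemma bAB:
  assumes "F \<subseteq> {0..<p+1}"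
    and "fst (es ! 0) = v \<longleftrightarrow> 0 \<in> A" "fst (es ! Suc 0) = v \<longleftrightarrow> Suc 0 \<in> A"
    "fst (es ! Suc (Suc 0)) = v \<longleftrightarrow> Suc (Suc 0) \<in> A"
    "\<And>d. 2 \<le> d \<Longrightarrow> d < p \<Longrightarrow> fst (es ! Suc d) = v \<longleftrightarrow> Suc d \<in> A"
    and "snd (es ! 0) = v \<longleftrightarrow> 0 \<in> B" "snd (es ! Suc 0) = v \<longleftrightarrow> Suc 0 \<in> B"
    "snd (es ! Suc (Suc 0)) = v \<longleftrightarrow> Suc (Suc 0) \<in> B"
    "\<And>d. 2 \<le> d \<Longrightarrow> d < p \<Longrightarrow> snd (es ! Suc d) = v \<longleftrightarrow> Suc d \<in> B"
  shows "v \<in> bdry es F \<longleftrightarrow> odd (card (F \<inter> A) + card (F \<inter> B))"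
proof (rule bdry_AB)
  show "F \<subseteq> {0..<length es}" using assms(1) len by simp
  have c: "e = 0 \<or> e = Suc 0 \<or> e = Suc (Suc 0) \<or> (\<exists>d. e = Suc d \<and> 2 \<le> d \<and> d < p)" if "e < length es" for e
    using that len by presburger
  show "fst (es ! e) = v \<longleftrightarrow> e \<in> A" if "e < length es" for e
    using c[OF that] assms(2-5) by auto
  show "snd (es ! e) = v \<longleftrightarrow> e \<in> B" if "e < length es" for e
    using c[OF that] assms(6-9) by auto
qed

lemmas esimps = nth0 nth1 nth2 nthS jeq jneq

lemma b_j1: "F \<subseteq> {0..<p+1} \<Longrightarrow> j 1 \<in> bdry es F \<longleftrightarrow> (0 \<in> F \<longleftrightarrow> Suc 0 \<notin> F)"
proof -
  assume F: "F \<subseteq> {0..<p+1}"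
  have "j 1 \<in> bdry es F \<longleftrightarrow> odd (card (F \<inter> {0, Suc 0}) + card (F \<inter> {}))"
    by (rule bAB[OF F]) (use p2 in \<open>auto simp: esimps\<close>)
  then show ?thesis by (simp add: Int_insert_right split: if_splits)
qed

lemma b_j2: "F \<subseteq> {0..<p+1} \<Longrightarrow> j 2 \<in> bdry es F \<longleftrightarrow> 0 \<in> F"
proof -
  assume F: "F \<subseteq> {0..<p+1}"
  have "j 2 \<in> bdry es F \<longleftrightarrow> odd (card (F \<inter> {}) + card (F \<inter> {0}))"
    by (rule bAB[OF F]) (use p2 in \<open>auto simp: esimps\<close>)
  then show ?thesis by (simp add: Int_insert_right split: if_splits)
qed

lemma b_j3: "F \<subseteq> {0..<p+1} \<Longrightarrow> j 3 \<in> bdry es F \<longleftrightarrow> Suc 0 \<in> F"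
proof -
  assume F: "F \<subseteq> {0..<p+1}"
  have "j 3 \<in> bdry es F \<longleftrightarrow> odd (card (F \<inter> {}) + card (F \<inter> {Suc 0}))"
    by (rule bAB[OF F]) (use p2 in \<open>auto simp: esimps\<close>)
  then show ?thesis by (simp add: Int_insert_right split: if_splits)
qed

lemma b_j4: "F \<subseteq> {0..<p+1} \<Longrightarrow> j 4 \<in> bdry es F \<longleftrightarrow> Suc (Suc 0) \<in> F"
proof -
  assume F: "F \<subseteq> {0..<p+1}"
  have "j 4 \<in> bdry es F \<longleftrightarrow> odd (card (F \<inter> {Suc (Suc 0)}) + card (F \<inter> {}))"
    by (rule bAB[OF F]) (use p2 in \<open>auto simp: esimps\<close>)
  then show ?thesis by (simp add: Int_insert_right split: if_splits)
qed

lemma b_v0: "F \<subseteq> {0..<p+1} \<Longrightarrow> v0 \<in> bdry es F \<longleftrightarrow> Suc (Suc 0) \<in> F"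
proof -
  assume F: "F \<subseteq> {0..<p+1}"
  have "v0 \<in> bdry es F \<longleftrightarrow> odd (card (F \<inter> {}) + card (F \<inter> {Suc (Suc 0)}))"
    by (rule bAB[OF F]) (use p2 in \<open>auto simp: esimps\<close>)
  then show ?thesis by (simp add: Int_insert_right split: if_splits)
qed

lemma b_odd: "F \<subseteq> {0..<p+1} \<Longrightarrow> 2 \<le> d \<Longrightarrow> d < p \<Longrightarrow> j (2*d+1) \<in> bdry es F \<longleftrightarrow> Suc d \<in> F"
proof -
  assume F: "F \<subseteq> {0..<p+1}" and d: "2 \<le> d" "d < p"
  have "j (2*d+1) \<in> bdry es F \<longleftrightarrow> odd (card (F \<inter> {Suc d}) + card (F \<inter> {}))"
    by (rule bAB[OF F]) (use d in \<open>auto simp: esimps\<close>)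
  then show ?thesis by (simp add: Int_insert_right split: if_splits)
qed

lemma b_even: "F \<subseteq> {0..<p+1} \<Longrightarrow> 2 \<le> d \<Longrightarrow> d < p \<Longrightarrow> j (2*d+2) \<in> bdry es F \<longleftrightarrow> Suc d \<in> F"
proof -
  assume F: "F \<subseteq> {0..<p+1}" and d: "2 \<le> d" "d < p"
  have "j (2*d+2) \<in> bdry es F \<longleftrightarrow> odd (card (F \<inter> {}) + card (F \<inter> {Suc d}))"
    by (rule bAB[OF F]) (use d in \<open>auto simp: esimps\<close>)
  then show ?thesis by (simp add: Int_insert_right split: if_splits)
qed

lemma b_other: "F \<subseteq> {0..<p+1} \<Longrightarrow> v \<notin> JJ \<Longrightarrow> v \<noteq> v0 \<Longrightarrow> v \<notin> bdry es F"
proof -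
  assume F: "F \<subseteq> {0..<p+1}" and v: "v \<notin> JJ" "v \<noteq> v0"
  have "v \<in> bdry es F \<longleftrightarrow> odd (card (F \<inter> {}) + card (F \<inter> {}))"
    by (rule bAB[OF F]) (use v p2 in \<open>auto simp: esimps\<close>)
  then show ?thesis by auto
qed

lemma A1: "e < length es \<Longrightarrow> rep e \<in> JJ"
  unfolding rep_def len using p2 by auto

lemma rep2: "rep (Suc (Suc 0)) = j 4" unfolding rep_def by simp
lemma repS: "2 \<le> d \<Longrightarrow> rep (Suc d) = j (2*d+2)" unfolding rep_def by simp

lemma A2: "F \<subseteq> {0..<length es} \<Longrightarrow> e < length es \<Longrightarrow> rep e \<in> bdry es F \<longleftrightarrow> e \<in> F"
proof -
  assume F: "F \<subseteq> {0..<length es}" and e: "e < length es"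
  have F': "F \<subseteq> {0..<p+1}" using F len by simp
  have "e = 0 \<or> e = Suc 0 \<or> e = Suc (Suc 0) \<or> (\<exists>d. e = Suc d \<and> 2 \<le> d \<and> d < p)"
    using e len by presburger
  then show ?thesis
  proof (elim disjE exE conjE)
    assume "e = 0" then show ?thesis using b_j2[OF F'] by (simp add: rep_def)
  next
    assume "e = Suc 0" then show ?thesis using b_j3[OF F'] by (simp add: rep_def)
  next
    assume "e = Suc (Suc 0)" then show ?thesis using b_j4[OF F'] by (simp add: rep2)
  next
    fix d assume "e = Suc d" "2 \<le> d" "d < p"
    then show ?thesis using b_even[OF F'] by (simp add: repS)
  qed
qed

lemma A3: "e < length es \<Longrightarrow> rep e \<noteq> j 1 \<and> rep e \<noteq> v0"
proof -
  assume e: "e < length es"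
  have "rep e \<noteq> v0" using A1[OF e] v0 by auto
  moreover have "rep e \<noteq> j 1" using e len p2 unfolding rep_def by (auto simp: jeq)
  ultimately show ?thesis by simp
qed

abbreviation "RR P \<equiv> Rset (length es) rep P"

lemma RR_sub: "RR P \<subseteq> {0..<p+1}" unfolding Rset_def len by auto
lemma RR_mem: "e \<in> RR P \<longleftrightarrow> e < p + 1 \<and> rep e \<in> P" unfolding Rset_def len by auto

lemma bj1: "j 1 \<in> bdry es (RR P) \<longleftrightarrow> (j 2 \<in> P \<longleftrightarrow> j 3 \<notin> P)"
  using b_j1[OF RR_sub] RR_mem[of 0] RR_mem[of "Suc 0"] p2 unfolding rep_def by simp
lemma bj2: "j 2 \<in> bdry es (RR P) \<longleftrightarrow> j 2 \<in> P"
  using b_j2[OF RR_sub] RR_mem[of 0] unfolding rep_def by simp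
lemma bj3: "j 3 \<in> bdry es (RR P) \<longleftrightarrow> j 3 \<in> P"
  using b_j3[OF RR_sub] RR_mem[of "Suc 0"] p2 unfolding rep_def by simp
lemma bj4: "j 4 \<in> bdry es (RR P) \<longleftrightarrow> j 4 \<in> P"
  using b_j4[OF RR_sub] RR_mem[of "Suc (Suc 0)"] p2 rep2 by simp
lemma bv0: "v0 \<in> bdry es (RR P) \<longleftrightarrow> j 4 \<in> P"
  using b_v0[OF RR_sub] RR_mem[of "Suc (Suc 0)"] p2 rep2 by simp
lemma bodd: "2 \<le> d \<Longrightarrow> d < p \<Longrightarrow> j (2*d+1) \<in> bdry es (RR P) \<longleftrightarrow> j (2*d+2) \<in> P"
  using b_odd[OF RR_sub] RR_mem[of "Suc d"] repS by simp
lemma beven: "2 \<le> d \<Longrightarrow> d < p \<Longrightarrow> j (2*d+2) \<in> bdry es (RR P) \<longleftrightarrow> j (2*d+2) \<in> P"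
  using b_even[OF RR_sub] RR_mem[of "Suc d"] repS by simp
lemma bother: "v \<notin> JJ \<Longrightarrow> v \<noteq> v0 \<Longrightarrow> v \<notin> bdry es (RR P)"
  using b_other[OF RR_sub] by blast

lemma vcases:
  assumes "k \<in> {1..2*p}"
  obtains "k = 1" | "k = 2" | "k = 3" | "k = 4" | d where "k = 2*d+1" "2 \<le> d" "d < p"
    | d where "k = 2*d+2" "2 \<le> d" "d < p"
proof -
  consider "k \<le> 4" | "even k" "k > 4" | "odd k" "k > 4" by linarith
  then show ?thesis
  proof cases
    case 1
    then have "k = 1 \<or> k = 2 \<or> k = 3 \<or> k = 4" using assms by auto
    then show ?thesis using that by blast
  next
    case 2
    then obtain m where m: "k = 2*m" by (metis evenE)
    then have "m \<ge> 3" using 2 by auto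
    then have "k = 2*(m-1)+2" "m - 1 < p" "2 \<le> m - 1" using m assms by auto
    then show ?thesis using that by blast
  next
    case 3
    then obtain e where e: "k = 2*e+1" by (metis oddE)
    then have "2 \<le> e" "e < p" using assms 3 by auto
    then show ?thesis using that e by blast
  qed
qed

definition pairsU where "pairsU = unit ` {2..<p}"
definition core where "core = {j 1, j 2, j 3, j 4}"

lemma unit_inter: "e \<in> {2..<p} \<Longrightarrow> e' \<in> {2..<p} \<Longrightarrow> x \<in> unit e \<Longrightarrow> x \<in> unit e' \<Longrightarrow> e = e'"
  unfolding unit_def by (auto simp: jeq)

lemma unit_props: "e \<in> {2..<p} \<Longrightarrow> unit e \<subseteq> JJ \<and> unit e \<inter> core = {} \<and> card (unit e) = 2"
  unfolding unit_def core_def by (auto simp: jeq)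

lemma core_sub: "core \<subseteq> JJ" unfolding core_def using p2 by auto

lemma pairs_part: "partition_on (JJ - core) pairsU"
proof (rule partition_onI)
  show "\<Union>pairsU = JJ - core"
  proof
    show "\<Union>pairsU \<subseteq> JJ - core" unfolding pairsU_def using unit_props by blast
    show "JJ - core \<subseteq> \<Union>pairsU"
    proof
      fix v assume v: "v \<in> JJ - core"
      then obtain k where k: "k \<in> {1..2*p}" "v = j k" by auto
      from k(1) show "v \<in> \<Union>pairsU"
      proof (cases rule: vcases)
        case (5 d)
        have "v \<in> unit d" using 5 k by (simp add: unit_def)
        moreover have "unit d \<in> pairsU" using 5 by (simp add: pairsU_def)
        ultimately show ?thesis by blast
      next
        case (6 d)
        have "v \<in> unit d" using 6 k by (simp add: unit_def)
        moreover have "unit d \<in> pairsU" using 6 by (simp add: pairsU_def)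
        ultimately show ?thesis by blast
      qed (use v k in \<open>auto simp: core_def\<close>)
    qed
  qed
  show "\<And>u u'. u \<in> pairsU \<Longrightarrow> u' \<in> pairsU \<Longrightarrow> u \<noteq> u' \<Longrightarrow> disjnt u u'"
    unfolding pairsU_def disjnt_def using unit_inter by fastforce
  show "{} \<notin> pairsU" unfolding pairsU_def unit_def by auto
qed

lemma card_pairs: "card pairsU = p - 2"
proof -
  have "inj_on unit {2..<p}"
  proof (rule inj_onI)
    fix e e' assume "e \<in> {2..<p}" "e' \<in> {2..<p}" "unit e = unit e'"
    then show "e = e'" using unit_inter[of e e' "j (2*e+1)"] unfolding unit_def by auto
  qed
  then show ?thesis unfolding pairsU_def by (simp add: card_image)
qed

lemma fin_pairs: "finite pairsU" unfolding pairsU_def by simp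

lemma core_notin: "A \<subseteq> core \<Longrightarrow> A \<noteq> {} \<Longrightarrow> A \<notin> pairsU"
  using unit_props unfolding pairsU_def by blast

lemma core_disj: "A \<subseteq> core \<Longrightarrow> disjnt A (\<Union>pairsU)"
  using unit_props unfolding pairsU_def disjnt_def by blast

lemma split_part:
  assumes "A \<union> B = core" "A \<inter> B = {}" "A \<noteq> {}" "B \<noteq> {}"
  shows "partition_on JJ (insert A (insert B pairsU))" "card (insert A (insert B pairsU)) = p"
proof -
  have AB: "A \<subseteq> core" "B \<subseteq> core" using assms by auto
  have d1: "disjnt A (\<Union>(insert B pairsU))" using core_disj[OF AB(1)] assms(2) unfolding disjnt_def by auto
  have d2: "disjnt B (\<Union>pairsU)" using core_disj[OF AB(2)] .
  have e: "JJ - A - B = JJ - core" using assms(1) by blast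
  have "partition_on (JJ - A - B) pairsU" unfolding e by (rule pairs_part)
  then have "partition_on (JJ - A) (insert B pairsU)"
    using partition_on_insert[OF d2] AB core_sub assms by auto
  then show "partition_on JJ (insert A (insert B pairsU))"
    using partition_on_insert[OF d1] AB core_sub assms by auto
  have "A \<noteq> B" using assms by auto
  then show "card (insert A (insert B pairsU)) = p"
    using core_notin[OF AB(1) assms(3)] core_notin[OF AB(2) assms(4)] fin_pairs card_pairs p2 by simp
qed

lemma core_part: "partition_on JJ (insert core pairsU)" "card (insert core pairsU) = p - 1"
proof -
  have cne: "core \<noteq> {}" unfolding core_def by simp
  have "partition_on (JJ - core) pairsU" by (rule pairs_part)
  then show "partition_on JJ (insert core pairsU)"
    using partition_on_insert[OF core_disj[OF order.refl]] core_sub cne by auto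
  show "card (insert core pairsU) = p - 1"
    using core_notin[OF order.refl cne] fin_pairs card_pairs p2 by simp
qed

lemma card2: "a \<in> {1..2*p} \<Longrightarrow> b \<in> {1..2*p} \<Longrightarrow> a \<noteq> b \<Longrightarrow> card {j a, j b} = 2"
  using jeq by auto

lemma core4: "card core = 4" unfolding core_def using p2 by (auto simp: jeq)

definition "U1 = insert {j 1, j 4} (insert {j 2, j 3} pairsU)"
definition "U2 = insert {j 2, j 4} (insert {j 1, j 3} pairsU)"
definition "U3 = insert {j 3, j 4} (insert {j 1, j 2} pairsU)"
definition "U0 = insert core pairsU"

lemma jdist: "j 1 \<noteq> j 2" "j 1 \<noteq> j 3" "j 1 \<noteq> j 4" "j 2 \<noteq> j 3" "j 2 \<noteq> j 4" "j 3 \<noteq> j 4"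
  using p2 by (auto simp: jeq)

lemma U1: "partition_on JJ U1" "card U1 = p"
  unfolding U1_def by (rule split_part; use jdist in \<open>auto simp: core_def\<close>)+
lemma U2: "partition_on JJ U2" "card U2 = p"
  unfolding U2_def by (rule split_part; use jdist in \<open>auto simp: core_def\<close>)+
lemma U3: "partition_on JJ U3" "card U3 = p"
  unfolding U3_def by (rule split_part; use jdist in \<open>auto simp: core_def\<close>)+
lemma U0: "partition_on JJ U0" "card U0 = p - 1"
  unfolding U0_def by (rule core_part)+

lemma ev_pairs: "u \<in> pairsU \<Longrightarrow> even (card u)" unfolding pairsU_def using unit_props by auto
lemma U1_ev: "u \<in> U1 \<Longrightarrow> even (card u)" unfolding U1_def using ev_pairs card2[of 1 4] card2[of 2 3] p2 by auto
lemma U2_ev: "u \<in> U2 \<Longrightarrow> even (card u)" unfolding U2_def using ev_pairs card2[of 2 4] card2[of 1 3] p2 by auto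
lemma U3_ev: "u \<in> U3 \<Longrightarrow> even (card u)" unfolding U3_def using ev_pairs card2[of 3 4] card2[of 1 2] p2 by auto

lemma coarser_insert: "PP \<in> coarser J (insert A V) \<longleftrightarrow> PP \<in> coarser J V \<and> (\<exists>P\<in>PP. A \<subseteq> P)"
  unfolding coarser_def by auto

definition qf :: "'v set set \<Rightarrow> 'v set" where "qf PP = (THE P. P \<in> PP \<and> j 4 \<in> P)"
definition "CC = coarser JJ U1 \<union> coarser JJ U2 \<union> coarser JJ U3"

lemma together:
  assumes "partition_on J PP" "P0 \<in> PP" "x \<in> P0" "y \<in> P0" "P \<in> PP"
  shows "x \<in> P \<longleftrightarrow> y \<in> P"
  using assms unfolding partition_on_def disjoint_def by blast

lemma memC: "PP \<in> coarser JJ (insert A (insert B pairsU)) \<longleftrightarrow>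
   PP \<in> coarser JJ pairsU \<and> (\<exists>P\<in>PP. A \<subseteq> P) \<and> (\<exists>P\<in>PP. B \<subseteq> P)"
  unfolding coarser_insert by blast

lemma char: "gcond JJ (j 1) v0 es rep PP Q \<longleftrightarrow> PP \<in> CC \<and> Q = qf PP"
proof
  assume g: "gcond JJ (j 1) v0 es rep PP Q"
  have part: "partition_on JJ PP" and QP: "Q \<in> PP"
    and bP: "\<And>P. P \<in> PP - {Q} \<Longrightarrow> bdry es (RR P) = P"
    and bQ: "bdry es (RR Q) = (Q - {j 1, v0}) \<union> ({j 1, v0} - Q)"
    using g unfolding gcond_def by auto
  have PJ: "\<And>P. P \<in> PP \<Longrightarrow> P \<subseteq> JJ" using part unfolding partition_on_def by blast
  have uniq: "\<And>P P' x. P \<in> PP \<Longrightarrow> P' \<in> PP \<Longrightarrow> x \<in> P \<Longrightarrow> x \<in> P' \<Longrightarrow> P = P'"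
    using part unfolding partition_on_def disjoint_def by blast
  have exb: "\<And>x. x \<in> JJ \<Longrightarrow> \<exists>P\<in>PP. x \<in> P" using part unfolding partition_on_def by blast
  have j1v0: "j 1 \<noteq> v0" using jneq(1)[of 1] p2 by auto
  have j4Q: "j 4 \<in> Q"
  proof -
    have "j 4 \<in> JJ" using p2 by auto
    then obtain P where P: "P \<in> PP" "j 4 \<in> P" using exb by blast
    then have "v0 \<in> bdry es (RR P)" using bv0 by simp
    have "P = Q"
    proof (rule ccontr)
      assume "P \<noteq> Q"
      then have "bdry es (RR P) = P" using bP P by simp
      then show False using \<open>v0 \<in> bdry es (RR P)\<close> PJ[OF P(1)] v0 by auto
    qed
    then show ?thesis using P by simp
  qed
  have par: "((j 1 \<in> P) \<noteq> (j 4 \<in> P)) = ((j 2 \<in> P) \<noteq> (j 3 \<in> P))" if P: "P \<in> PP" for P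
  proof (cases "P = Q")
    case True
    have "j 1 \<in> bdry es (RR Q) \<longleftrightarrow> j 1 \<notin> Q" using bQ j1v0 by auto
    then show ?thesis using True j4Q bj1[of Q] by auto
  next
    case False
    have "j 4 \<notin> P" using False uniq[OF P QP] j4Q by blast
    moreover have "j 1 \<in> bdry es (RR P) \<longleftrightarrow> j 1 \<in> P" using bP P False by auto
    ultimately show ?thesis using bj1[of P] by auto
  qed
  have covp: "PP \<in> coarser JJ pairsU"
    unfolding coarser_def
  proof (intro CollectI conjI ballI part)
    fix u assume "u \<in> pairsU"
    then obtain d where d: "d \<in> {2..<p}" "u = unit d" unfolding pairsU_def by auto
    have "j (2*d+2) \<in> JJ" using d by auto
    then obtain P where P: "P \<in> PP" "j (2*d+2) \<in> P" using exb by blast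
    have inb: "j (2*d+1) \<in> bdry es (RR P)" using bodd[of d P] d P by simp
    have ne: "j (2*d+1) \<noteq> j 1" "j (2*d+1) \<noteq> v0" using d jeq[of "2*d+1" 1] jneq(1)[of "2*d+1"] by auto
    have "j (2*d+1) \<in> P"
    proof (cases "P = Q")
      case True
      then show ?thesis using inb bQ ne by auto
    next
      case False
      then show ?thesis using inb bP P by auto
    qed
    then show "\<exists>P\<in>PP. u \<subseteq> P" using P d unfolding unit_def by auto
  qed
  have jJ: "j 1 \<in> JJ" "j 2 \<in> JJ" "j 3 \<in> JJ" using p2 by auto
  obtain P1 where P1: "P1 \<in> PP" "j 1 \<in> P1" using exb jJ(1) by blast
  obtain P2 where P2: "P2 \<in> PP" "j 2 \<in> P2" using exb jJ(2) by blast
  obtain P3 where P3: "P3 \<in> PP" "j 3 \<in> P3" using exb jJ(3) by blast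
  have "PP \<in> CC"
  proof (cases "j 1 \<in> Q")
    case True
    have Q23: "j 2 \<in> Q \<longleftrightarrow> j 3 \<in> Q" using par[OF QP] True j4Q by auto
    have "\<exists>P\<in>PP. {j 2, j 3} \<subseteq> P"
    proof (cases "j 2 \<in> Q")
      case True
      then show ?thesis using Q23 QP by auto
    next
      case False
      then have "P2 \<noteq> Q" using P2 by auto
      then have "j 4 \<notin> P2" "j 1 \<notin> P2" using uniq[OF P2(1) QP] j4Q \<open>j 1 \<in> Q\<close> by auto
      then have "j 3 \<in> P2" using par[OF P2(1)] P2 by auto
      then show ?thesis using P2 by auto
    qed
    moreover have "\<exists>P\<in>PP. {j 1, j 4} \<subseteq> P" using True j4Q QP by auto
    ultimately have "PP \<in> coarser JJ U1" unfolding U1_def using memC covp by blast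
    then show ?thesis unfolding CC_def by blast
  next
    case False
    then have "P1 \<noteq> Q" using P1 by auto
    then have j4P1: "j 4 \<notin> P1" using uniq[OF P1(1) QP] j4Q by auto
    have x1: "(j 2 \<in> P1) \<noteq> (j 3 \<in> P1)" using par[OF P1(1)] P1 j4P1 by auto
    have xQ: "(j 2 \<in> Q) \<noteq> (j 3 \<in> Q)" using par[OF QP] False j4Q by auto
    show ?thesis
    proof (cases "j 2 \<in> Q")
      case True
      then have "j 2 \<notin> P1" using uniq[OF P1(1) QP] \<open>P1 \<noteq> Q\<close> by auto
      then have "j 3 \<in> P1" using x1 by auto
      then have "\<exists>P\<in>PP. {j 1, j 3} \<subseteq> P" "\<exists>P\<in>PP. {j 2, j 4} \<subseteq> P" using P1 True j4Q QP by auto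
      then have "PP \<in> coarser JJ U2" unfolding U2_def using memC covp by blast
      then show ?thesis unfolding CC_def by blast
    next
      case False
      then have "j 3 \<in> Q" using xQ by auto
      then have "j 3 \<notin> P1" using uniq[OF P1(1) QP] \<open>P1 \<noteq> Q\<close> by auto
      then have "j 2 \<in> P1" using x1 by auto
      then have "\<exists>P\<in>PP. {j 1, j 2} \<subseteq> P" "\<exists>P\<in>PP. {j 3, j 4} \<subseteq> P" using P1 \<open>j 3 \<in> Q\<close> j4Q QP by auto
      then have "PP \<in> coarser JJ U3" unfolding U3_def using memC covp by blast
      then show ?thesis unfolding CC_def by blast
    qed
  qed
  moreover have "Q = qf PP" unfolding qf_def
    by (rule the_equality[symmetric]) (use QP j4Q uniq in auto)
  ultimately show "PP \<in> CC \<and> Q = qf PP" by simp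
next
  assume a: "PP \<in> CC \<and> Q = qf PP"
  have Qd: "Q = qf PP" using a by simp
  have inC: "PP \<in> coarser JJ U1 \<or> PP \<in> coarser JJ U2 \<or> PP \<in> coarser JJ U3" using a unfolding CC_def by blast
  have covp: "PP \<in> coarser JJ pairsU" using inC memC unfolding U1_def U2_def U3_def by blast
  have part: "partition_on JJ PP" and cov: "\<forall>u\<in>pairsU. \<exists>P\<in>PP. u \<subseteq> P"
    using covp unfolding coarser_def by auto
  have PJ: "\<And>P. P \<in> PP \<Longrightarrow> P \<subseteq> JJ" using part unfolding partition_on_def by blast
  have uniq: "\<And>P P' x. P \<in> PP \<Longrightarrow> P' \<in> PP \<Longrightarrow> x \<in> P \<Longrightarrow> x \<in> P' \<Longrightarrow> P = P'"
    using part unfolding partition_on_def disjoint_def by blast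
  have exb: "\<And>x. x \<in> JJ \<Longrightarrow> \<exists>P\<in>PP. x \<in> P" using part unfolding partition_on_def by blast
  have "j 4 \<in> JJ" using p2 by auto
  then have ex1: "\<exists>!P. P \<in> PP \<and> j 4 \<in> P" using exb uniq by blast
  have QP: "Q \<in> PP" and j4Q: "j 4 \<in> Q" using theI'[OF ex1] Qd unfolding qf_def by auto
  have j4P: "j 4 \<in> P \<longleftrightarrow> P = Q" if "P \<in> PP" for P using uniq[OF that QP] j4Q by auto
  have ev: "\<forall>P\<in>PP. 0 < card P \<and> even (card P)"
    using inC coarser_even[OF U1(1) _ U1_ev] coarser_even[OF U2(1) _ U2_ev] coarser_even[OF U3(1) _ U3_ev]
    by auto
  have par: "((j 1 \<in> P) \<noteq> (j 4 \<in> P)) = ((j 2 \<in> P) \<noteq> (j 3 \<in> P))" if P: "P \<in> PP" for P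
  proof -
    from inC show ?thesis
    proof (elim disjE)
      assume "PP \<in> coarser JJ U1"
      then obtain Pa Pb where "Pa \<in> PP" "{j 1, j 4} \<subseteq> Pa" "Pb \<in> PP" "{j 2, j 3} \<subseteq> Pb"
        unfolding U1_def using memC by blast
      then show ?thesis using together[OF part _ _ _ P] by (metis insert_subset)
    next
      assume "PP \<in> coarser JJ U2"
      then obtain Pa Pb where "Pa \<in> PP" "{j 2, j 4} \<subseteq> Pa" "Pb \<in> PP" "{j 1, j 3} \<subseteq> Pb"
        unfolding U2_def using memC by blast
      then show ?thesis using together[OF part _ _ _ P] by (metis insert_subset)
    next
      assume "PP \<in> coarser JJ U3"
      then obtain Pa Pb where "Pa \<in> PP" "{j 3, j 4} \<subseteq> Pa" "Pb \<in> PP" "{j 1, j 2} \<subseteq> Pb"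
        unfolding U3_def using memC by blast
      then show ?thesis using together[OF part _ _ _ P] by (metis insert_subset)
    qed
  qed
  have same: "j (2*d+1) \<in> P \<longleftrightarrow> j (2*d+2) \<in> P" if "P \<in> PP" "2 \<le> d" "d < p" for P d
  proof -
    have "unit d \<in> pairsU" using that unfolding pairsU_def by auto
    then obtain P' where "P' \<in> PP" "unit d \<subseteq> P'" using cov by blast
    then show ?thesis using uniq[OF that(1) \<open>P' \<in> PP\<close>] unfolding unit_def by auto
  qed
  have j1v0: "j 1 \<noteq> v0" using jneq(1)[of 1] p2 by auto
  have vert: "v \<in> bdry es (RR P) \<longleftrightarrow> (if v = j 1 then ((j 1 \<in> P) \<noteq> (P = Q)) else if v = v0 then P = Q else v \<in> P)"
    if P: "P \<in> PP" for P v
  proof -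
    consider "v = j 1" | "v = v0" | "v \<in> JJ" "v \<noteq> j 1" | "v \<notin> JJ" "v \<noteq> v0" by blast
    then show ?thesis
    proof cases
      case 1
      then show ?thesis using bj1[of P] par[OF P] j4P[OF P] by auto
    next
      case 2
      then show ?thesis using bv0[of P] j4P[OF P] j1v0 by auto
    next
      case 3
      have nv: "v \<noteq> v0" using 3 v0 by auto
      from 3 obtain k where k: "k \<in> {1..2*p}" "v = j k" by auto
      from k(1) show ?thesis
      proof (cases rule: vcases)
        case 1 then show ?thesis using k 3 by simp
      next
        case 2 then show ?thesis using k 3 nv bj2[of P] by simp
      next
        case 3 then show ?thesis using k \<open>v \<noteq> j 1\<close> nv bj3[of P] by simp
      next
        case 4 then show ?thesis using k \<open>v \<noteq> j 1\<close> nv bj4[of P] by simp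
      next
        case (5 d) then show ?thesis using k \<open>v \<noteq> j 1\<close> nv bodd[of d P] same[OF P 5(2,3)] by simp
      next
        case (6 d) then show ?thesis using k \<open>v \<noteq> j 1\<close> nv beven[of d P] by simp
      qed
    next
      case 4
      then show ?thesis using bother[of v P] PJ[OF P] j1v0 p2 by auto
    qed
  qed
  have bP: "\<forall>P\<in>PP - {Q}. bdry es (RR P) = P"
  proof
    fix P assume P: "P \<in> PP - {Q}"
    show "bdry es (RR P) = P"
    proof (rule set_eqI)
      fix v show "v \<in> bdry es (RR P) \<longleftrightarrow> v \<in> P"
        using vert[of P v] P PJ[of P] v0 by auto
    qed
  qed
  have bQ: "bdry es (RR Q) = (Q - {j 1, v0}) \<union> ({j 1, v0} - Q)"
  proof (rule set_eqI)
    fix v show "v \<in> bdry es (RR Q) \<longleftrightarrow> v \<in> (Q - {j 1, v0}) \<union> ({j 1, v0} - Q)"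
      using vert[OF QP, of v] PJ[OF QP] v0 j1v0 by auto
  qed
  have nc: "\<not> conn es (RR Q) (j 1) v0"
  proof
    assume c: "conn es (RR Q) (j 1) v0"
    have "\<And>e. e \<in> RR Q \<Longrightarrow> fst (es ! e) \<in> {j 4, v0} \<longleftrightarrow> snd (es ! e) \<in> {j 4, v0}"
    proof -
      fix e assume "e \<in> RR Q"
      then have e: "e < p + 1" using RR_mem by auto
      then have "e = 0 \<or> e = Suc 0 \<or> e = Suc (Suc 0) \<or> (\<exists>d. e = Suc d \<and> 2 \<le> d \<and> d < p)"
        by presburger
      then show "fst (es ! e) \<in> {j 4, v0} \<longleftrightarrow> snd (es ! e) \<in> {j 4, v0}"
        using jdist p2 by (auto simp: esimps)
    qed
    from conn_closed[OF c this] show False using jdist j1v0 by auto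
  qed
  show "gcond JJ (j 1) v0 es rep PP Q" unfolding gcond_def using part ev QP bP bQ nc by auto
qed

lemma chain3:
  assumes "partition_on J PP" "Pa \<in> PP" "Pb \<in> PP" "Pc \<in> PP" "X \<subseteq> Pa" "Y \<subseteq> Pb" "Z \<subseteq> Pc"
    "x \<in> X" "x \<in> Y" "y \<in> Y" "y \<in> Z"
  shows "X \<union> Y \<union> Z \<subseteq> Pa"
proof -
  have uniq: "\<And>P P' x. P \<in> PP \<Longrightarrow> P' \<in> PP \<Longrightarrow> x \<in> P \<Longrightarrow> x \<in> P' \<Longrightarrow> P = P'"
    using assms(1) unfolding partition_on_def disjoint_def by blast
  have "Pa = Pb" using uniq[OF assms(2,3), of x] assms by auto
  moreover have "Pb = Pc" using uniq[OF assms(3,4), of y] assms by auto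
  ultimately show ?thesis using assms by auto
qed

lemma memC0: "PP \<in> coarser JJ U0 \<longleftrightarrow> PP \<in> coarser JJ pairsU \<and> (\<exists>P\<in>PP. core \<subseteq> P)"
  unfolding U0_def coarser_insert by blast

lemma C0_sub: "coarser JJ U0 \<subseteq> coarser JJ U1" "coarser JJ U0 \<subseteq> coarser JJ U2" "coarser JJ U0 \<subseteq> coarser JJ U3"
proof -
  have h: "PP \<in> coarser JJ (insert A (insert B pairsU))" if H: "PP \<in> coarser JJ U0" "A \<subseteq> core" "B \<subseteq> core" for PP A B
  proof -
    obtain P where "P \<in> PP" "core \<subseteq> P" and c: "PP \<in> coarser JJ pairsU" using H(1) memC0 by blast
    then show ?thesis unfolding memC using H(2,3) by blast
  qed
  show "coarser JJ U0 \<subseteq> coarser JJ U1" unfolding U1_def using h by (auto simp: core_def)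
  show "coarser JJ U0 \<subseteq> coarser JJ U2" unfolding U2_def using h by (auto simp: core_def)
  show "coarser JJ U0 \<subseteq> coarser JJ U3" unfolding U3_def using h by (auto simp: core_def)
qed

lemma C_inter: "coarser JJ U1 \<inter> coarser JJ U2 = coarser JJ U0"
  "coarser JJ U1 \<inter> coarser JJ U3 = coarser JJ U0" "coarser JJ U2 \<inter> coarser JJ U3 = coarser JJ U0"
proof -
  have part: "partition_on JJ PP" if "PP \<in> coarser JJ pairsU" for PP using that unfolding coarser_def by auto
  have i12: "PP \<in> coarser JJ U0" if H: "PP \<in> coarser JJ U1" "PP \<in> coarser JJ U2" for PP
  proof -
    have c: "PP \<in> coarser JJ pairsU" using H(1) unfolding U1_def memC by blast
    obtain Pa where Pa: "Pa \<in> PP" "{j 1, j 4} \<subseteq> Pa" using H(1) unfolding U1_def memC by blast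
    obtain Pb where Pb: "Pb \<in> PP" "{j 2, j 4} \<subseteq> Pb" using H(2) unfolding U2_def memC by blast
    obtain Pc where Pc: "Pc \<in> PP" "{j 2, j 3} \<subseteq> Pc" using H(1) unfolding U1_def memC by blast
    note P = Pa Pb Pc
    have "{j 1, j 4} \<union> {j 2, j 4} \<union> {j 2, j 3} \<subseteq> Pa"
      by (rule chain3[OF part[OF c] P(1) P(3) P(5) P(2) P(4) P(6), of "j 4" "j 2"]) auto
    then have "core \<subseteq> Pa" unfolding core_def by auto
    then show ?thesis using memC0 c P(1) by blast
  qed
  have i13: "PP \<in> coarser JJ U0" if H: "PP \<in> coarser JJ U1" "PP \<in> coarser JJ U3" for PP
  proof -
    have c: "PP \<in> coarser JJ pairsU" using H(1) unfolding U1_def memC by blast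
    obtain Pa where Pa: "Pa \<in> PP" "{j 1, j 4} \<subseteq> Pa" using H(1) unfolding U1_def memC by blast
    obtain Pb where Pb: "Pb \<in> PP" "{j 3, j 4} \<subseteq> Pb" using H(2) unfolding U3_def memC by blast
    obtain Pc where Pc: "Pc \<in> PP" "{j 2, j 3} \<subseteq> Pc" using H(1) unfolding U1_def memC by blast
    note P = Pa Pb Pc
    have "{j 1, j 4} \<union> {j 3, j 4} \<union> {j 2, j 3} \<subseteq> Pa"
      by (rule chain3[OF part[OF c] P(1) P(3) P(5) P(2) P(4) P(6), of "j 4" "j 3"]) auto
    then have "core \<subseteq> Pa" unfolding core_def by auto
    then show ?thesis using memC0 c P(1) by blast
  qed
  have i23: "PP \<in> coarser JJ U0" if H: "PP \<in> coarser JJ U2" "PP \<in> coarser JJ U3" for PP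
  proof -
    have c: "PP \<in> coarser JJ pairsU" using H(1) unfolding U2_def memC by blast
    obtain Pa where Pa: "Pa \<in> PP" "{j 2, j 4} \<subseteq> Pa" using H(1) unfolding U2_def memC by blast
    obtain Pb where Pb: "Pb \<in> PP" "{j 3, j 4} \<subseteq> Pb" using H(2) unfolding U3_def memC by blast
    obtain Pc where Pc: "Pc \<in> PP" "{j 1, j 3} \<subseteq> Pc" using H(1) unfolding U2_def memC by blast
    note P = Pa Pb Pc
    have "{j 2, j 4} \<union> {j 3, j 4} \<union> {j 1, j 3} \<subseteq> Pa"
      by (rule chain3[OF part[OF c] P(1) P(3) P(5) P(2) P(4) P(6), of "j 4" "j 3"]) auto
    then have "core \<subseteq> Pa" unfolding core_def by auto
    then show ?thesis using memC0 c P(1) by blast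
  qed
  show "coarser JJ U1 \<inter> coarser JJ U2 = coarser JJ U0" using i12 C0_sub by blast
  show "coarser JJ U1 \<inter> coarser JJ U3 = coarser JJ U0" using i13 C0_sub by blast
  show "coarser JJ U2 \<inter> coarser JJ U3 = coarser JJ U0" using i23 C0_sub by blast
qed

lemma finC: "finite (coarser JJ U)"
proof (rule finite_subset)
  show "coarser JJ U \<subseteq> {PP. partition_on JJ PP}" unfolding coarser_def by auto
  show "finite {PP. partition_on JJ PP}" by (rule finitely_many_partition_on) simp
qed

lemma sumU:
  assumes "partition_on JJ U" "card U \<ge> 1"
  shows "(\<Sum>PP\<in>coarser JJ U. w (card PP)) = (if card U = 1 then 1 else 0)"
proof -
  have "(\<Sum>PP\<in>coarser JJ U. w (card PP)) = (\<Sum>\<pi>\<in>{\<pi>. partition_on U \<pi>}. w (card \<pi>))"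
    by (rule coarser_sum[OF assms(1)]) simp
  also have "\<dots> = (if card U = 1 then 1 else 0)"
    by (rule part_sum) (use assms(2) in \<open>auto intro: card_ge_0_finite\<close>)
  finally show ?thesis .
qed

lemma result: "Rsum p JJ (j 1) v0 es = (if p = 2 then -2 else 0)"
proof -
  define S where "S = (\<lambda>C::'v set set set. \<Sum>PP\<in>C. w (card PP))"
  define C1 where "C1 = coarser JJ U1"
  define C2 where "C2 = coarser JJ U2"
  define C3 where "C3 = coarser JJ U3"
  define C0 where "C0 = coarser JJ U0"
  have S1: "S C1 = 0" unfolding S_def C1_def using sumU[OF U1(1)] U1(2) p2 by simp
  have S2: "S C2 = 0" unfolding S_def C2_def using sumU[OF U2(1)] U2(2) p2 by simp
  have S3: "S C3 = 0" unfolding S_def C3_def using sumU[OF U3(1)] U3(2) p2 by simp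
  have S0: "S C0 = (if p = 2 then 1 else 0)" unfolding S_def C0_def using sumU[OF U0(1)] U0(2) p2 by auto
  have f: "finite C1" "finite C2" "finite C3" unfolding C1_def C2_def C3_def by (rule finC, rule finC, rule finC)
  have i12: "C1 \<inter> C2 = C0" and i3: "(C1 \<union> C2) \<inter> C3 = C0"
    using C_inter unfolding C1_def C2_def C3_def C0_def by blast+
  have a: "S (C1 \<union> C2) + S C0 = S C1 + S C2"
    unfolding S_def i12[symmetric] by (rule sum.union_inter[OF f(1,2)])
  have b: "S (C1 \<union> C2 \<union> C3) + S C0 = S (C1 \<union> C2) + S C3"
    unfolding S_def i3[symmetric] by (rule sum.union_inter) (use f in auto)
  have "Rsum p JJ (j 1) v0 es = S CC"
    unfolding S_def by (rule Rsum_reduce[OF A1 A2 A3 char])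
  also have "CC = C1 \<union> C2 \<union> C3" unfolding CC_def C1_def C2_def C3_def ..
  finally show ?thesis using a b S1 S2 S3 S0 by (cases "p = 2") auto
qed

end


theorem mainTheorem10:
  fixes j :: "nat \<Rightarrow> 'v" and u0 v0 :: 'v and p :: nat
  assumes "1 \<le> p"
    and "inj_on j {1..2*p}"
    and "v0 \<notin> j ` {1..2*p}"
  shows "Rsum p (j ` {1..2*p}) (j 1) v0 (KI_edges p j v0) = (if p = 1 then 1 else 0)
    \<and> (u0 \<notin> j ` {1..2*p} \<and> u0 \<noteq> v0 \<longrightarrow>
         Rsum p (j ` {1..2*p}) u0 v0 (KII_edges p j u0 v0) = (if p = 1 then 1 else 0))
    \<and> (2 \<le> p \<longrightarrow> Rsum p (j ` {1..2*p}) (j 1) v0 (H_edges p j v0) = (if p = 2 then -2 else 0))"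
proof (intro conjI impI)
  have "KIloc p j v0" by unfold_locales (use assms in auto)
  then show "Rsum p (j ` {1..2*p}) (j 1) v0 (KI_edges p j v0) = (if p = 1 then 1 else 0)"
    by (rule KIloc.result)
next
  assume "u0 \<notin> j ` {1..2*p} \<and> u0 \<noteq> v0"
  then have "KIIloc p j u0 v0" by unfold_locales (use assms in auto)
  then show "Rsum p (j ` {1..2*p}) u0 v0 (KII_edges p j u0 v0) = (if p = 1 then 1 else 0)"
    by (rule KIIloc.result)
next
  assume "2 \<le> p"
  then have "Hloc p j v0" by unfold_locales (use assms in auto)
  then show "Rsum p (j ` {1..2*p}) (j 1) v0 (H_edges p j v0) = (if p = 2 then -2 else 0)"
    by (rule Hloc.result)
qed

end
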